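(* Fix $w\in S_n$ and $1\le i\le n-1$. Let $p\in H^*_T(X_w)$ have expansion $p=\sum_{v\le w}c_v[\Omega_v]_{X_w}$ with $c_v\in\mathbb{C}[t_1,\ldots,t_n]$. Then $$D_i(p)=\sum_{v\le w}\partial_i(c_v)[\Omega_v]_{X_w}+\sum_{v\le w:\ s_{i,i+1}v<v}s_{i,i+1}(c_v)[\Omega_{s_{i,i+1}v}]_{X_w}.$$ In particular $D_i(p)\in H^*_T(X_w)$.
   Context: Let $G=GL_n(\mathbb{C})$, $B$ (resp. $B^-$) the invertible upper- (resp. lower-) triangular matrices, and $T$ the diagonal torus. Permutations are identified with permutation matrices via $we_i=e_{w(i)}$, and $s_{jk}$ is the transposition of $j,k$. $X_w=\overline{BwB/B}$, and the Bruhat order is $v\le w$ iff $[v]\in X_w$. $\mathrm{Inv}(v)=\{t_a-t_b:a<b,\ v^{-1}(a)>v^{-1}(b)\}$ and $\ell(v)=|\mathrm{Inv}(v)|$. In GKM form, $H^*_T(X_w)$ is the ring of tuples $(p_u)_{u\le w}$ of polynomials in $\mathbb{C}[t_1,\ldots,t_n]$ with $p_u-p_{s_{jk}u}\in\langle t_j-t_k\rangle$ whenever $j<k$ and $u,s_{jk}u\le w$; $H^*_T(G/B)$ is the case of the longest permutation. $S_n$ acts on polynomials by $(u\cdot f)(t_1,\ldots,t_n)=f(t_{u(1)},\ldots,t_{u(n)})$, on $H^*_T(G/B)$ by $(u\cdot p)_v=u\cdot p_{u^{-1}v}$, and on $H^*_T(X_w)$ by $s\cdot\iota(p)=\iota(s\cdot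 p)$, where $\iota((p_u)_{u\in S_n})=(p_u)_{u\le w}$. The Schubert class $[\Omega_v]=(p^v_u)_u\in H^*_T(G/B)$ is the equivariant class of $\overline{B^-vB/B}$; equivalently, it is the unique class with $p^v_u=0$ unless $u\ge v$, each nonzero $p^v_u$ homogeneous of degree $\ell(v)$, and $p^v_v=\prod_{\beta\in\mathrm{Inv}(v)}\beta$. Set $[\Omega_v]_{X_w}=\iota([\Omega_v])$; these form a $\mathbb{C}[t_1,\ldots,t_n]$-basis of $H^*_T(X_w)$. The left divided difference operator is $D_i(p)=\dfrac{p-s_{i,i+1}\cdot p}{t_i-t_{i+1}}$ (computed componentwise), and $\partial_i(f)=\dfrac{f-s_{i,i+1}\cdot f}{t_i-t_{i+1}}$ for $f\in\mathbb{C}[t_1,\ldots,t_n]$.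
   Formalization: $D_i(p)$ means $\iota$ applied to $D_i$ of the class $\sum_{v\le w}c_v[\Omega_v]$ in $H^*_T(G/B)$ rather than through the action $s\cdot\iota(p)=\iota(s\cdot p)$ on $H^*_T(X_w)$; each division by $t_i-t_{i+1}$ at $u\le w$ is also asserted exact. Apart from conventions, each condition added here is assumed in the paper as well or is needed for the statement above to hold. *)

theory Defs
  imports Complex_Main "HOL-Library.Poly_Mapping" "HOL-Combinatorics.Transposition" "HOL-Combinatorics.Permutations"
begin

text \<open>Polynomials in the variables t_i (i a natural number), complex coefficients:
  a polynomial is a finitely supported map from monomials (exponent vectors) to coefficients.\<close>
type_synonym cpoly = "(nat \<Rightarrow>\<^sub>0 nat) \<Rightarrow>\<^sub>0 complex"

definition var :: "nat \<Rightarrow> cpoly" where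
  "var i = Poly_Mapping.single (Poly_Mapping.single i 1) 1"

definition polys :: "nat \<Rightarrow> cpoly set" where
  "polys n = {f. \<forall>m \<in> Poly_Mapping.keys f. Poly_Mapping.keys m \<subseteq> {1..n}}"

definition mdeg :: "(nat \<Rightarrow>\<^sub>0 nat) \<Rightarrow> nat" where
  "mdeg m = (\<Sum>x\<in>Poly_Mapping.keys m. Poly_Mapping.lookup m x)"

definition homogeneous :: "nat \<Rightarrow> cpoly \<Rightarrow> bool" where
  "homogeneous d f \<longleftrightarrow> (\<forall>m \<in> Poly_Mapping.keys f. mdeg m = d)"

definition Sn :: "nat \<Rightarrow> (nat \<Rightarrow> nat) set" where
  "Sn n = {u. u permutes {1..n}}"

text \<open>(u . f)(t_1,...,t_n) = f(t_{u(1)},...,t_{u(n)}): the variable t_i is replaced by t_{u(i)};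
  hence the coefficient of a monomial m in u . f is the coefficient of m o u in f.\<close>
definition perm_poly :: "(nat \<Rightarrow> nat) \<Rightarrow> cpoly \<Rightarrow> cpoly" where
  "perm_poly u f = Abs_poly_mapping (\<lambda>m. Poly_Mapping.lookup f (Poly_Mapping.map_key u m))"

definition Inv :: "nat \<Rightarrow> (nat \<Rightarrow> nat) \<Rightarrow> cpoly set" where
  "Inv n v = {var a - var b | a b. 1 \<le> a \<and> a < b \<and> b \<le> n \<and> inv v a > inv v b}"

definition len :: "nat \<Rightarrow> (nat \<Rightarrow> nat) \<Rightarrow> nat" where
  "len n v = card (Inv n v)"

text \<open>Bruhat order (Chevalley's combinatorial description): the reflexive transitive closure of
  u < t u for transpositions t with len u < len (t u).\<close>
definition bruhat_step :: "nat \<Rightarrow> (nat \<Rightarrow> nat) \<Rightarrow> (nat \<Rightarrow> nat) \<Rightarrow> bool" where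
  "bruhat_step n u u' \<longleftrightarrow>
     (\<exists>j k. 1 \<le> j \<and> j < k \<and> k \<le> n \<and> u' = transpose j k \<circ> u \<and> len n u < len n u')"

definition bruhat_le :: "nat \<Rightarrow> (nat \<Rightarrow> nat) \<Rightarrow> (nat \<Rightarrow> nat) \<Rightarrow> bool" where
  "bruhat_le n v w \<longleftrightarrow> v \<in> Sn n \<and> w \<in> Sn n \<and> (bruhat_step n)\<^sup>*\<^sup>* v w"

definition bruhat_lt :: "nat \<Rightarrow> (nat \<Rightarrow> nat) \<Rightarrow> (nat \<Rightarrow> nat) \<Rightarrow> bool" where
  "bruhat_lt n v w \<longleftrightarrow> bruhat_le n v w \<and> v \<noteq> w"

text \<open>GKM ring on an index set U of permutations: tuples (p_u)_{u in U}, encoded as functions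
  vanishing outside U, with values in C[t_1..t_n] and the GKM divisibility conditions.\<close>
definition gkm_on :: "nat \<Rightarrow> (nat \<Rightarrow> nat) set \<Rightarrow> ((nat \<Rightarrow> nat) \<Rightarrow> cpoly) set" where
  "gkm_on n U = {p. (\<forall>u. u \<notin> U \<longrightarrow> p u = 0) \<and> (\<forall>u\<in>U. p u \<in> polys n) \<and>
     (\<forall>u j k. u \<in> U \<and> 1 \<le> j \<and> j < k \<and> k \<le> n \<and> transpose j k \<circ> u \<in> U \<longrightarrow>
        (var j - var k) dvd (p u - p (transpose j k \<circ> u)))}"

definition HX :: "nat \<Rightarrow> (nat \<Rightarrow> nat) \<Rightarrow> ((nat \<Rightarrow> nat) \<Rightarrow> cpoly) set" where
  "HX n w = gkm_on n {u. bruhat_le n u w}"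

definition HGB :: "nat \<Rightarrow> ((nat \<Rightarrow> nat) \<Rightarrow> cpoly) set" where
  "HGB n = gkm_on n (Sn n)"

definition iota :: "nat \<Rightarrow> (nat \<Rightarrow> nat) \<Rightarrow> ((nat \<Rightarrow> nat) \<Rightarrow> cpoly) \<Rightarrow> ((nat \<Rightarrow> nat) \<Rightarrow> cpoly)" where
  "iota n w p = (\<lambda>u. if bruhat_le n u w then p u else 0)"

definition schubert :: "nat \<Rightarrow> (nat \<Rightarrow> nat) \<Rightarrow> ((nat \<Rightarrow> nat) \<Rightarrow> cpoly)" where
  "schubert n v = (THE p. p \<in> HGB n \<and>
      (\<forall>u. \<not> bruhat_le n v u \<longrightarrow> p u = 0) \<and>
      (\<forall>u. p u \<noteq> 0 \<longrightarrow> homogeneous (len n v) (p u)) \<and>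
      p v = (\<Prod>\<beta>\<in>Inv n v. \<beta>))"

definition schubertX :: "nat \<Rightarrow> (nat \<Rightarrow> nat) \<Rightarrow> (nat \<Rightarrow> nat) \<Rightarrow> ((nat \<Rightarrow> nat) \<Rightarrow> cpoly)" where
  "schubertX n w v = iota n w (schubert n v)"

definition act :: "(nat \<Rightarrow> nat) \<Rightarrow> ((nat \<Rightarrow> nat) \<Rightarrow> cpoly) \<Rightarrow> ((nat \<Rightarrow> nat) \<Rightarrow> cpoly)" where
  "act u p = (\<lambda>v. perm_poly u (p (inv u \<circ> v)))"

definition divq :: "nat \<Rightarrow> cpoly \<Rightarrow> cpoly" where
  "divq i g = (THE r. (var i - var (Suc i)) * r = g)"

definition sref :: "nat \<Rightarrow> nat \<Rightarrow> nat" where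
  "sref i = transpose i (Suc i)"

definition dd :: "nat \<Rightarrow> cpoly \<Rightarrow> cpoly" where
  "dd i f = divq i (f - perm_poly (sref i) f)"

definition Dop :: "nat \<Rightarrow> ((nat \<Rightarrow> nat) \<Rightarrow> cpoly) \<Rightarrow> ((nat \<Rightarrow> nat) \<Rightarrow> cpoly)" where
  "Dop i p = (\<lambda>v. divq i (p v - act (sref i) p v))"

end

theory Submission
  imports Defs
begin


abbreviation lk where "lk \<equiv> Poly_Mapping.lookup"
abbreviation ks where "ks \<equiv> Poly_Mapping.keys"
abbreviation sg where "sg \<equiv> Poly_Mapping.single"
abbreviation const :: "complex \<Rightarrow> cpoly" where "const c \<equiv> sg 0 c"

lemma pm_expand:
  "(p :: 'a \<Rightarrow>\<^sub>0 'b::comm_monoid_add) = (\<Sum>x\<in>ks p. sg x (lk p x))"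
proof (rule poly_mapping_eqI)
  fix k
  have "lk (\<Sum>x\<in>ks p. sg x (lk p x)) k = (\<Sum>x\<in>ks p. lk (sg x (lk p x)) k)"
    by (simp add: lookup_sum)
  also have "\<dots> = (\<Sum>x\<in>ks p. if x = k then lk p x else 0)"
    by (rule sum.cong) (auto simp: lookup_single)
  also have "\<dots> = lk p k" by (simp add: in_keys_iff)
  finally show "lk p k = lk (\<Sum>x\<in>ks p. sg x (lk p x)) k" by simp
qed

lemma pm_expand_superset:
  assumes "finite S" "ks (p :: 'a \<Rightarrow>\<^sub>0 'b::comm_monoid_add) \<subseteq> S"
  shows "p = (\<Sum>x\<in>S. sg x (lk p x))"
proof -
  have "(\<Sum>x\<in>S. sg x (lk p x)) = (\<Sum>x\<in>ks p. sg x (lk p x))"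
    using assms by (intro sum.mono_neutral_right) (auto simp: in_keys_iff)
  then show ?thesis using pm_expand[of p] by simp
qed

definition lext :: "((nat \<Rightarrow>\<^sub>0 nat) \<Rightarrow> cpoly) \<Rightarrow> cpoly \<Rightarrow> cpoly" where
  "lext M f = (\<Sum>m\<in>ks f. const (lk f m) * M m)"

lemma lext_superset:
  assumes "finite S" "ks f \<subseteq> S"
  shows "lext M f = (\<Sum>m\<in>S. const (lk f m) * M m)"
  unfolding lext_def using assms
  by (intro sum.mono_neutral_left) (auto simp: in_keys_iff)

lemma lext_add: "lext M (f + g) = lext M f + lext M g"
proof -
  let ?S = "ks f \<union> ks g"
  have "lext M (f + g) = (\<Sum>m\<in>?S. const (lk (f+g) m) * M m)"
    by (rule lext_superset) (auto dest: subsetD[OF keys_add])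
  also have "\<dots> = (\<Sum>m\<in>?S. const (lk f m) * M m) + (\<Sum>m\<in>?S. const (lk g m) * M m)"
    by (simp add: lookup_add single_add distrib_right sum.distrib)
  also have "\<dots> = lext M f + lext M g"
    by (simp add: lext_superset[symmetric])
  finally show ?thesis .
qed

lemma lext_zero[simp]: "lext M 0 = 0" by (simp add: lext_def)

lemma lext_single: "lext M (sg m c) = const c * M m"
  by (cases "c = 0") (simp_all add: lext_def)

lemma lext_minus: "lext M (- f) = - lext M f"
  by (metis add.inverse_unique add.right_inverse lext_add lext_zero)

lemma lext_diff: "lext M (f - g) = lext M f - lext M g"
  using lext_add[of M f "-g"] lext_minus[of M g] by simp

lemma lext_sum: "lext M (\<Sum>x\<in>A. F x) = (\<Sum>x\<in>A. lext M (F x))"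
  by (induction A rule: infinite_finite_induct) (simp_all add: lext_add)

definition multM :: "((nat \<Rightarrow>\<^sub>0 nat) \<Rightarrow> cpoly) \<Rightarrow> bool" where
  "multM M \<longleftrightarrow> M 0 = 1 \<and> (\<forall>a b. M (a + b) = M a * M b)"

lemma const_mult: "const (a * b) = const a * const b"
  by (simp add: mult_single)

lemma lext_mult:
  assumes "multM M"
  shows "lext M (f * g) = lext M f * lext M g"
proof -
  have fg: "f * g = (\<Sum>a\<in>ks f. \<Sum>b\<in>ks g. sg (a + b) (lk f a * lk g b))"
  proof -
    have "f * g = (\<Sum>a\<in>ks f. sg a (lk f a)) * (\<Sum>b\<in>ks g. sg b (lk g b))"
      using pm_expand[of f] pm_expand[of g] by simp
    also have "\<dots> = (\<Sum>a\<in>ks f. \<Sum>b\<in>ks g. sg a (lk f a) * sg b (lk g b))"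
      by (simp add: sum_product)
    finally show ?thesis by (simp add: mult_single)
  qed
  have "lext M (f * g) = (\<Sum>a\<in>ks f. \<Sum>b\<in>ks g. const (lk f a * lk g b) * M (a + b))"
    by (simp add: fg lext_sum lext_single)
  also have "\<dots> = (\<Sum>a\<in>ks f. \<Sum>b\<in>ks g. (const (lk f a) * M a) * (const (lk g b) * M b))"
    using assms by (simp add: multM_def const_mult mult_ac)
  also have "\<dots> = lext M f * lext M g"
    by (simp add: lext_def sum_product)
  finally show ?thesis .
qed

lemma lext_const: "multM M \<Longrightarrow> lext M (const c) = const c"
  by (simp add: lext_single multM_def)

lemma lext_one: "multM M \<Longrightarrow> lext M 1 = 1"
  using lext_const[of M 1] by simp

lemma lext_prod: "multM M \<Longrightarrow> lext M (\<Prod>x\<in>A. F x) = (\<Prod>x\<in>A. lext M (F x))"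
  by (induction A rule: infinite_finite_induct) (simp_all add: lext_mult lext_one)

lemma lext_power: "multM M \<Longrightarrow> lext M (f ^ k) = lext M f ^ k"
  by (induction k) (simp_all add: lext_mult lext_one)

lemma additive_eq:
  fixes F G :: "cpoly \<Rightarrow> cpoly"
  assumes "\<And>f g. F (f + g) = F f + F g" "\<And>f g. G (f + g) = G f + G g"
    and "\<And>m c. F (sg m c) = G (sg m c)"
  shows "F (p::cpoly) = G p"
proof -
  have F0: "F 0 = 0" using assms(1)[of 0 0] by simp
  have G0: "G 0 = 0" using assms(2)[of 0 0] by simp
  have FS: "F (\<Sum>x\<in>A. H x) = (\<Sum>x\<in>A. F (H x))" for A :: "'c set" and H
    by (induction A rule: infinite_finite_induct) (simp_all add: F0 assms(1))
  have GS: "G (\<Sum>x\<in>A. H x) = (\<Sum>x\<in>A. G (H x))" for A :: "'c set" and H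
    by (induction A rule: infinite_finite_induct) (simp_all add: G0 assms(2))
  have "F p = (\<Sum>x\<in>ks p. F (sg x (lk p x)))" by (subst pm_expand[of p]) (rule FS)
  also have "\<dots> = (\<Sum>x\<in>ks p. G (sg x (lk p x)))" by (simp add: assms(3))
  also have "\<dots> = G p" by (subst (2) pm_expand[of p]) (rule GS[symmetric])
  finally show ?thesis .
qed

lemma var_power: "var j ^ k = sg (sg j k) 1"
  by (induction k) (simp_all add: var_def mult_single single_add[symmetric] mult.commute)

lemma mono_prod_aux:
  "finite S \<Longrightarrow> (\<Prod>x\<in>S. var x ^ k x) = sg (\<Sum>x\<in>S. sg x (k x)) 1"
  by (induction S rule: finite_induct) (simp_all add: var_power mult_single add.commute)

lemma mono_prod: "sg m 1 = (\<Prod>x\<in>ks m. var x ^ lk m x)"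
  by (simp add: mono_prod_aux pm_expand[of m, symmetric])

lemma single_const: "sg m c = const c * sg m 1"
  by (simp add: mult_single)



definition ishom :: "(cpoly \<Rightarrow> cpoly) \<Rightarrow> bool" where
  "ishom F \<longleftrightarrow> (\<forall>f g. F (f + g) = F f + F g) \<and> (\<forall>f g. F (f * g) = F f * F g) \<and> (\<forall>c. F (const c) = const c)"

lemma lext_ishom: "multM M \<Longrightarrow> ishom (lext M)"
  by (simp add: ishom_def lext_add lext_mult lext_const)

context fixes F assumes H: "ishom F" begin
lemma hom_add: "F (f + g) = F f + F g" using H by (simp add: ishom_def)
lemma hom_mult: "F (f * g) = F f * F g" using H by (simp add: ishom_def)
lemma hom_const: "F (const c) = const c" using H by (simp add: ishom_def)
lemma hom_zero: "F 0 = 0" using hom_const[of 0] by simp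
lemma hom_one: "F 1 = 1" using hom_const[of 1] by simp
lemma hom_minus: "F (- f) = - F f"
  by (metis add.inverse_unique add.right_inverse hom_add hom_zero)
lemma hom_diff: "F (f - g) = F f - F g"
  using hom_add[of f "-g"] hom_minus[of g] by simp
lemma hom_sum: "F (\<Sum>x\<in>A. G x) = (\<Sum>x\<in>A. F (G x))"
  by (induction A rule: infinite_finite_induct) (simp_all add: hom_add hom_zero)
lemma hom_prod: "F (\<Prod>x\<in>A. G x) = (\<Prod>x\<in>A. F (G x))"
  by (induction A rule: infinite_finite_induct) (simp_all add: hom_mult hom_one)
lemma hom_power: "F (f ^ k) = F f ^ k"
  by (induction k) (simp_all add: hom_mult hom_one)
lemma hom_dvd: "a dvd b \<Longrightarrow> F a dvd F b"
  by (metis dvd_def hom_mult)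
end

lemma ishom_comp: "ishom F \<Longrightarrow> ishom G \<Longrightarrow> ishom (F \<circ> G)"
  by (simp add: ishom_def)

lemma poly_induct:
  assumes add: "\<And>f g. P f \<Longrightarrow> P g \<Longrightarrow> P (f + g)"
    and mult: "\<And>f g. P f \<Longrightarrow> P g \<Longrightarrow> P (f * g)"
    and cst: "\<And>c. P (const c)"
    and vr: "\<And>j. P (var j)"
  shows "P f"
proof -
  have P0: "P 0" using cst[of 0] by simp
  have P1: "P 1" using cst[of 1] by simp
  have PS: "(\<And>x. x \<in> A \<Longrightarrow> P (G x)) \<Longrightarrow> P (\<Sum>x\<in>A. G x)" for A :: "'a set" and G
    by (induction A rule: infinite_finite_induct) (simp_all add: P0 add)
  have PP: "(\<And>x. x \<in> A \<Longrightarrow> P (G x)) \<Longrightarrow> P (\<Prod>x\<in>A. G x)" for A :: "'a set" and G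
    by (induction A rule: infinite_finite_induct) (simp_all add: P1 mult)
  have PW: "P (g ^ k)" if "P g" for g k
    using that by (induction k) (simp_all add: P1 mult)
  have "f = (\<Sum>m\<in>ks f. sg m (lk f m))" by (rule pm_expand)
  also have "\<dots> = (\<Sum>m\<in>ks f. const (lk f m) * (\<Prod>x\<in>ks m. var x ^ lk m x))"
    by (rule sum.cong[OF refl]) (metis single_const mono_prod)
  also have "P \<dots>"
    by (intro PS mult cst PP PW vr)
  finally show ?thesis .
qed

lemma hom_eq_vars:
  assumes "ishom F" "ishom G" "\<And>j. F (var j) = G (var j)"
  shows "F f = G f"
  by (rule poly_induct[of "\<lambda>f. F f = G f"])
     (simp_all add: assms hom_add[OF assms(1)] hom_add[OF assms(2)] hom_mult[OF assms(1)]
       hom_mult[OF assms(2)] hom_const[OF assms(1)] hom_const[OF assms(2)])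

lemma good_hom:
  assumes "ishom F" "\<And>j. a dvd var j - F (var j)"
  shows "a dvd f - F f"
proof (rule poly_induct[of "\<lambda>f. a dvd f - F f"])
  fix f g assume "a dvd f - F f" "a dvd g - F g"
  moreover have e: "f + g - F (f + g) = (f - F f) + (g - F g)"
    by (simp add: hom_add[OF assms(1)] algebra_simps)
  ultimately show "a dvd f + g - F (f + g)"
    unfolding e by (intro dvd_add)
  have "f * g - F (f * g) = f * (g - F g) + F g * (f - F f)"
    by (simp add: hom_mult[OF assms(1)] algebra_simps)
  then show "a dvd f * g - F (f * g)"
    using \<open>a dvd f - F f\<close> \<open>a dvd g - F g\<close> by (simp add: dvd_add)
qed (simp_all add: assms hom_const[OF assms(1)])

text \<open>permutation action\<close>

lemma map_key_inv_cancel: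
  assumes "bij u"
  shows "Poly_Mapping.map_key (inv u) (Poly_Mapping.map_key u m) = m"
    "Poly_Mapping.map_key u (Poly_Mapping.map_key (inv u) m) = m"
proof -
  have iu: "inj u" "inj (inv u)" using assms by (auto simp: bij_is_inj bij_imp_bij_inv)
  have c1: "u \<circ> inv u = (\<lambda>x. x)" using assms by (metis bij_is_surj surj_iff id_def)
  have c2: "inv u \<circ> u = (\<lambda>x. x)" using assms by (metis bij_is_inj inj_iff id_def)
  have "Poly_Mapping.map_key (inv u) (Poly_Mapping.map_key u m) = Poly_Mapping.map_key (u \<circ> inv u) m"
    by (rule map_key_compose[OF iu(2) iu(1)])
  then show "Poly_Mapping.map_key (inv u) (Poly_Mapping.map_key u m) = m"
    by (simp only: c1 map_key_id)
  have "Poly_Mapping.map_key u (Poly_Mapping.map_key (inv u) m) = Poly_Mapping.map_key (inv u \<circ> u) m"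
    by (rule map_key_compose[OF iu(1) iu(2)])
  then show "Poly_Mapping.map_key u (Poly_Mapping.map_key (inv u) m) = m"
    by (simp only: c2 map_key_id)
qed

lemma lookup_perm:
  assumes "bij u"
  shows "lk (perm_poly u f) m = lk f (Poly_Mapping.map_key u m)"
proof -
  have "{m. lk f (Poly_Mapping.map_key u m) \<noteq> 0} \<subseteq> Poly_Mapping.map_key (inv u) ` ks f"
  proof
    fix m assume "m \<in> {m. lk f (Poly_Mapping.map_key u m) \<noteq> 0}"
    then have "Poly_Mapping.map_key u m \<in> ks f" by (simp add: in_keys_iff)
    then show "m \<in> Poly_Mapping.map_key (inv u) ` ks f"
      using map_key_inv_cancel(1)[OF assms, of m] by (metis image_eqI)
  qed
  then have "finite {m. lk f (Poly_Mapping.map_key u m) \<noteq> 0}"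
    by (rule finite_subset) simp
  then show ?thesis unfolding perm_poly_def
    by (subst Abs_poly_mapping_inverse) auto
qed

definition Mperm :: "(nat \<Rightarrow> nat) \<Rightarrow> (nat \<Rightarrow>\<^sub>0 nat) \<Rightarrow> cpoly" where
  "Mperm u m = sg (Poly_Mapping.map_key (inv u) m) 1"

lemma multM_perm: "bij u \<Longrightarrow> multM (Mperm u)"
  unfolding multM_def Mperm_def
  by (simp add: mult_single map_key_plus bij_is_inj bij_imp_bij_inv)

lemma perm_single:
  assumes "bij u"
  shows "perm_poly u (sg m c) = sg (Poly_Mapping.map_key (inv u) m) c"
proof (rule poly_mapping_eqI)
  fix m'
  have "(m = Poly_Mapping.map_key u m') = (Poly_Mapping.map_key (inv u) m = m')"
    using map_key_inv_cancel[OF assms] by metis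
  then show "lk (perm_poly u (sg m c)) m' = lk (sg (Poly_Mapping.map_key (inv u) m) c) m'"
    by (simp add: lookup_perm[OF assms] lookup_single when_def)
qed

lemma perm_add: "bij u \<Longrightarrow> perm_poly u (f + g) = perm_poly u f + perm_poly u g"
  by (rule poly_mapping_eqI) (simp add: lookup_perm lookup_add)

lemma perm_lext: "bij u \<Longrightarrow> perm_poly u f = lext (Mperm u) f"
  by (rule additive_eq[of "perm_poly u" "lext (Mperm u)"])
     (simp_all add: perm_add lext_add lext_single perm_single Mperm_def mult_single)

lemma perm_ishom: "bij u \<Longrightarrow> ishom (perm_poly u)"
proof -
  assume b: "bij u"
  have "perm_poly u = lext (Mperm u)" using perm_lext[OF b] by auto
  then show ?thesis using lext_ishom[OF multM_perm[OF b]] by simp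
qed

lemma perm_var: "bij u \<Longrightarrow> perm_poly u (var j) = var (u j)"
proof -
  assume b: "bij u"
  have i1: "inj (inv u)" using b by (simp add: bij_imp_bij_inv bij_is_inj)
  have "Poly_Mapping.map_key (inv u) (sg (inv u (u j)) 1) = sg (u j) 1"
    by (rule map_key_single[OF i1])
  moreover have "inv u (u j) = j" using b by (simp add: bij_is_inj)
  ultimately have mk: "Poly_Mapping.map_key (inv u) (sg j 1) = sg (u j) 1" by simp
  show ?thesis unfolding var_def perm_single[OF b] mk ..
qed

lemma perm_comp:
  assumes "bij u" "bij v"
  shows "perm_poly u (perm_poly v f) = perm_poly (u \<circ> v) f"
proof (rule poly_mapping_eqI)
  fix m :: "nat \<Rightarrow>\<^sub>0 nat"
  have "bij (u \<circ> v)" using assms by (simp add: bij_comp)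
  moreover have "Poly_Mapping.map_key v (Poly_Mapping.map_key u m) = Poly_Mapping.map_key (u \<circ> v) m"
    using assms by (simp add: map_key_compose bij_is_inj)
  ultimately show "lk (perm_poly u (perm_poly v f)) m = lk (perm_poly (u \<circ> v) f) m"
    using assms by (simp add: lookup_perm)
qed

lemma perm_id: "perm_poly id f = f"
proof (rule poly_mapping_eqI)
  fix m :: "nat \<Rightarrow>\<^sub>0 nat"
  have "Poly_Mapping.map_key id m = m" using map_key_id[of m] by (simp add: id_def)
  then show "lk (perm_poly id f) m = lk f m" by (simp add: lookup_perm)
qed

lemma perm_inj: "bij u \<Longrightarrow> perm_poly u f = 0 \<longleftrightarrow> f = 0"
proof
  assume b: "bij u" and "perm_poly u f = 0"
  then have "perm_poly (inv u) (perm_poly u f) = 0" using hom_zero[OF perm_ishom[of "inv u"]]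
    by (simp add: bij_imp_bij_inv)
  moreover have "inv u \<circ> u = id" using b by (simp add: bij_is_inj)
  ultimately show "f = 0" using b by (simp add: perm_comp bij_imp_bij_inv perm_id)
qed (simp add: hom_zero perm_ishom)



lemma keys_add_nat: "ks (a + b :: 'x \<Rightarrow>\<^sub>0 nat) = ks a \<union> ks b"
  by (auto simp: in_keys_iff lookup_add)

lemma lookup_var: "lk (var j) m = (if m = sg j 1 then 1 else 0)"
  by (simp add: var_def lookup_single when_def)

lemma var_inj: "var a = var b \<longleftrightarrow> a = b"
  by (metis var_def inj_single injD one_neq_zero lookup_single_eq lookup_single_not_eq)

lemma var_neq0: "var a \<noteq> 0"
  unfolding var_def by (metis lookup_single_eq lookup_zero one_neq_zero)

lemma var_diff_neq0: "a \<noteq> b \<Longrightarrow> var a - var b \<noteq> 0"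
  using var_inj by simp

text \<open>substitution of variables\<close>

definition Mv :: "(nat \<Rightarrow> nat) \<Rightarrow> (nat \<Rightarrow>\<^sub>0 nat) \<Rightarrow> cpoly" where
  "Mv \<sigma> m = (\<Prod>x\<in>ks m. var (\<sigma> x) ^ lk m x)"

lemma Mv_superset: "finite S \<Longrightarrow> ks m \<subseteq> S \<Longrightarrow> Mv \<sigma> m = (\<Prod>x\<in>S. var (\<sigma> x) ^ lk m x)"
  unfolding Mv_def by (intro prod.mono_neutral_left) (auto simp: in_keys_iff)

lemma multM_Mv: "multM (Mv \<sigma>)"
  unfolding multM_def
proof (intro conjI allI)
  show "Mv \<sigma> 0 = 1" by (simp add: Mv_def)
  fix a b :: "nat \<Rightarrow>\<^sub>0 nat"
  let ?S = "ks a \<union> ks b"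
  have "Mv \<sigma> (a + b) = (\<Prod>x\<in>?S. var (\<sigma> x) ^ lk (a + b) x)"
    by (rule Mv_superset) (auto simp: keys_add_nat)
  also have "\<dots> = (\<Prod>x\<in>?S. var (\<sigma> x) ^ lk a x) * (\<Prod>x\<in>?S. var (\<sigma> x) ^ lk b x)"
    by (simp add: lookup_add power_add prod.distrib)
  also have "\<dots> = Mv \<sigma> a * Mv \<sigma> b"
    by (simp add: Mv_superset[symmetric])
  finally show "Mv \<sigma> (a + b) = Mv \<sigma> a * Mv \<sigma> b" .
qed

definition vsub :: "(nat \<Rightarrow> nat) \<Rightarrow> cpoly \<Rightarrow> cpoly" where
  "vsub \<sigma> = lext (Mv \<sigma>)"

lemma vsub_ishom: "ishom (vsub \<sigma>)"
  unfolding vsub_def by (rule lext_ishom[OF multM_Mv])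

lemma vsub_var: "vsub \<sigma> (var j) = var (\<sigma> j)"
  by (simp add: vsub_def var_def lext_single Mv_def)

definition sbs :: "nat \<Rightarrow> nat \<Rightarrow> nat \<Rightarrow> nat" where
  "sbs c d = (\<lambda>x. if x = c then d else x)"

lemma dvd_iff_vsub:
  assumes "c \<noteq> d"
  shows "(var c - var d) dvd f \<longleftrightarrow> vsub (sbs c d) f = 0"
proof
  assume "(var c - var d) dvd f"
  then have "vsub (sbs c d) (var c - var d) dvd vsub (sbs c d) f"
    by (rule hom_dvd[OF vsub_ishom])
  then show "vsub (sbs c d) f = 0"
    by (simp add: hom_diff[OF vsub_ishom] vsub_var sbs_def)
next
  assume "vsub (sbs c d) f = 0"
  moreover have "(var c - var d) dvd f - vsub (sbs c d) f"
    by (rule good_hom[OF vsub_ishom]) (simp add: vsub_var sbs_def)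
  ultimately show "(var c - var d) dvd f" by simp
qed

lemma coprime_div:
  assumes "c \<noteq> d" "(var c - var d) dvd g * r" "vsub (sbs c d) g \<noteq> 0"
  shows "(var c - var d) dvd r"
  using assms by (simp add: dvd_iff_vsub hom_mult[OF vsub_ishom])

lemma vsub_pair:
  assumes "a < b" "c < d" "(a, b) \<noteq> (c, d)"
  shows "vsub (sbs c d) (var a - var b) \<noteq> 0"
proof -
  have "vsub (sbs c d) (var a - var b) = var (sbs c d a) - var (sbs c d b)"
    by (simp add: hom_diff[OF vsub_ishom] vsub_var)
  moreover have "sbs c d a \<noteq> sbs c d b" using assms by (auto simp: sbs_def)
  ultimately show ?thesis using var_diff_neq0 by simp
qed

lemma prod_pairs_dvd:
  assumes "finite S" "\<forall>(a,b)\<in>S. a < b" "\<forall>(a,b)\<in>S. (var a - var b) dvd g"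
  shows "(\<Prod>(a,b)\<in>S. var a - var b) dvd g"
  using assms
proof (induction S rule: finite_induct)
  case empty then show ?case by simp
next
  case (insert p S)
  obtain c d where p: "p = (c, d)" by force
  have cd: "c < d" using insert.prems(1) p by auto
  have IH: "(\<Prod>(a,b)\<in>S. var a - var b) dvd g"
    using insert.prems by (intro insert.IH) auto
  then obtain r where r: "g = (\<Prod>(a,b)\<in>S. var a - var b) * r" by (auto elim: dvdE)
  have "vsub (sbs c d) (\<Prod>(a,b)\<in>S. var a - var b) \<noteq> 0"
  proof -
    have "vsub (sbs c d) (\<Prod>(a,b)\<in>S. var a - var b) = (\<Prod>q\<in>S. vsub (sbs c d) (case q of (a, b) \<Rightarrow> var a - var b))"
      by (rule hom_prod[OF vsub_ishom])
    also have "\<dots> \<noteq> 0"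
    proof -
      have "\<forall>q\<in>S. vsub (sbs c d) (case q of (a, b) \<Rightarrow> var a - var b) \<noteq> 0"
      proof
        fix q assume q: "q \<in> S"
        obtain a b where ab: "q = (a, b)" by force
        have "a < b" using insert.prems(1) q ab by auto
        moreover have "(a, b) \<noteq> (c, d)" using insert.hyps q ab p by auto
        ultimately show "vsub (sbs c d) (case q of (a, b) \<Rightarrow> var a - var b) \<noteq> 0"
          using vsub_pair cd ab by simp
      qed
      then show ?thesis using insert.hyps(1) by (simp only: prod_zero_iff) blast
    qed
    finally show ?thesis .
  qed
  note A = this
  have B: "case p of (a, b) \<Rightarrow> (var a - var b) dvd g"
    by (rule bspec[OF insert.prems(2)]) simp
  have C: "(var c - var d) dvd g" using B p by simp
  have D: "(var c - var d) dvd (\<Prod>(a,b)\<in>S. var a - var b) * r" using C r by simp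
  have "(var c - var d) dvd r" by (rule coprime_div[OF _ D A]) (use cd in simp)
  then obtain k where k: "r = (var c - var d) * k" by (auto elim: dvdE)
  have P: "(\<Prod>(a,b)\<in>insert p S. var a - var b) = (var c - var d) * (\<Prod>(a,b)\<in>S. var a - var b)"
    using insert.hyps p by simp
  have "(\<Prod>(a,b)\<in>S. var a - var b) * r = ((var c - var d) * (\<Prod>(a,b)\<in>S. var a - var b)) * k"
    unfolding k by (simp only: mult.assoc mult.left_commute)
  then have "g = (\<Prod>(a,b)\<in>insert p S. var a - var b) * k" unfolding P using r by simp
  then show ?case by (rule dvdI)
qed

text \<open>polys n via a projection\<close>

definition Mpi :: "nat \<Rightarrow> (nat \<Rightarrow>\<^sub>0 nat) \<Rightarrow> cpoly" where
  "Mpi n m = (if ks m \<subseteq> {1..n} then sg m 1 else 0)"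

lemma multM_Mpi: "multM (Mpi n)"
  by (auto simp: multM_def Mpi_def keys_add_nat mult_single)

definition proj :: "nat \<Rightarrow> cpoly \<Rightarrow> cpoly" where "proj n = lext (Mpi n)"

lemma proj_ishom: "ishom (proj n)"
  unfolding proj_def by (rule lext_ishom[OF multM_Mpi])

lemma proj_in: "proj n f \<in> polys n"
proof -
  have "ks (proj n f) \<subseteq> (\<Union>m\<in>ks f. ks (const (lk f m) * Mpi n m))"
    unfolding proj_def lext_def by (rule keys_sum)
  also have "\<dots> \<subseteq> {m. ks m \<subseteq> {1..n}}"
    by (auto simp: Mpi_def mult_single split: if_splits dest!: subsetD)
  finally show ?thesis by (auto simp: polys_def)
qed

lemma proj_id: "f \<in> polys n \<Longrightarrow> proj n f = f"
proof -
  assume "f \<in> polys n"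
  then have "\<forall>m\<in>ks f. ks m \<subseteq> {1..n}" by (simp add: polys_def)
  then have "proj n f = (\<Sum>m\<in>ks f. sg m (lk f m))"
    unfolding proj_def lext_def by (intro sum.cong) (simp_all add: Mpi_def mult_single)
  then show ?thesis using pm_expand[of f] by simp
qed

lemma polys_iff: "f \<in> polys n \<longleftrightarrow> proj n f = f"
  using proj_in proj_id by metis

lemma polys_add: "f \<in> polys n \<Longrightarrow> g \<in> polys n \<Longrightarrow> f + g \<in> polys n"
  by (simp add: polys_iff hom_add[OF proj_ishom])
lemma polys_diff: "f \<in> polys n \<Longrightarrow> g \<in> polys n \<Longrightarrow> f - g \<in> polys n"
  by (simp add: polys_iff hom_diff[OF proj_ishom])
lemma polys_mult: "f \<in> polys n \<Longrightarrow> g \<in> polys n \<Longrightarrow> f * g \<in> polys n"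
  by (simp add: polys_iff hom_mult[OF proj_ishom])
lemma polys_const: "const c \<in> polys n"
  by (simp add: polys_iff hom_const[OF proj_ishom])
lemma polys_zero: "0 \<in> polys n"
  using polys_const[of 0 n] by simp
lemma polys_sum: "(\<And>x. x \<in> A \<Longrightarrow> F x \<in> polys n) \<Longrightarrow> (\<Sum>x\<in>A. F x) \<in> polys n"
  by (induction A rule: infinite_finite_induct) (simp_all add: polys_zero polys_add)
lemma polys_prod: "(\<And>x. x \<in> A \<Longrightarrow> F x \<in> polys n) \<Longrightarrow> (\<Prod>x\<in>A. F x) \<in> polys n"
  using polys_const[of 1 n]
  by (induction A rule: infinite_finite_induct) (simp_all add: polys_mult)
lemma polys_var: "1 \<le> j \<Longrightarrow> j \<le> n \<Longrightarrow> var j \<in> polys n"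
  by (simp add: polys_def var_def)

lemma polys_div:
  assumes "a \<in> polys n" "a \<noteq> 0" "a * r \<in> polys n"
  shows "r \<in> polys n"
proof -
  have "a * proj n r = a * r"
    using assms by (metis hom_mult[OF proj_ishom] polys_iff)
  then show ?thesis using assms(2) polys_iff by (metis mult_left_cancel)
qed

lemma polys_perm:
  assumes "u permutes {1..n}" "f \<in> polys n"
  shows "perm_poly u f \<in> polys n"
proof -
  have b: "bij u" using assms permutes_bij by blast
  have "proj n (perm_poly u f) = perm_poly u (proj n f)"
  proof -
    have "(proj n \<circ> perm_poly u) f = (perm_poly u \<circ> proj n) f"
    proof (rule hom_eq_vars[of "proj n \<circ> perm_poly u" "perm_poly u \<circ> proj n"])
      show "ishom (proj n \<circ> perm_poly u)" by (intro ishom_comp proj_ishom perm_ishom b)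
      show "ishom (perm_poly u \<circ> proj n)" by (intro ishom_comp proj_ishom perm_ishom b)
      fix j
      show "(proj n \<circ> perm_poly u) (var j) = (perm_poly u \<circ> proj n) (var j)"
      proof (cases "j \<in> {1..n}")
        case True
        then have "u j \<in> {1..n}" using assms permutes_in_image by metis
        then show ?thesis using True
          by (simp add: perm_var b proj_id polys_var)
      next
        case False
        then have "u j = j" using assms permutes_not_in by metis
        have "proj n (var j) = 0" using False
          by (auto simp: proj_def var_def lext_single Mpi_def)
        then show ?thesis using False \<open>u j = j\<close>
          by (simp add: perm_var b hom_zero[OF perm_ishom[OF b]])
      qed
    qed
    then show ?thesis by simp
  qed
  also have "\<dots> = perm_poly u f" using assms by (simp add: proj_id)
  finally show ?thesis by (simp add: polys_iff)
qed



lemma mdeg_superset: "finite S \<Longrightarrow> ks m \<subseteq> S \<Longrightarrow> mdeg m = (\<Sum>x\<in>S. lk m x)"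
  unfolding mdeg_def by (intro sum.mono_neutral_left) (auto simp: in_keys_iff)

lemma mdeg_add: "mdeg (a + b) = mdeg a + mdeg b"
proof -
  let ?S = "ks a \<union> ks b"
  have "mdeg (a + b) = (\<Sum>x\<in>?S. lk (a + b) x)" by (rule mdeg_superset) (auto simp: keys_add_nat)
  also have "\<dots> = (\<Sum>x\<in>?S. lk a x) + (\<Sum>x\<in>?S. lk b x)" by (simp add: lookup_add sum.distrib)
  also have "\<dots> = mdeg a + mdeg b" by (simp add: mdeg_superset[symmetric])
  finally show ?thesis .
qed

lemma mdeg_zero[simp]: "mdeg 0 = 0" by (simp add: mdeg_def)
lemma mdeg_single[simp]: "mdeg (sg j k) = k" by (cases "k = 0") (simp_all add: mdeg_def)

lemma mdeg_map_key:
  assumes "bij u" shows "mdeg (Poly_Mapping.map_key u m) = mdeg m"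
proof -
  have iu: "inj u" using assms bij_is_inj by blast
  have "mdeg (Poly_Mapping.map_key u m) = (\<Sum>x\<in>u -` ks m. lk m (u x))"
    by (simp add: mdeg_def keys_map_key[OF iu] map_key.rep_eq[OF iu])
  also have "\<dots> = (\<Sum>y\<in>u ` (u -` ks m). lk m y)"
    by (rule sum.reindex[symmetric, unfolded o_def]) (simp add: inj_on_def iu[unfolded inj_def])
  also have "u ` (u -` ks m) = ks m" using assms by (simp add: bij_is_surj surj_image_vimage_eq)
  finally show ?thesis by (simp add: mdeg_def)
qed

lemma homog_zero[simp]: "homogeneous d 0" by (simp add: homogeneous_def)

lemma homog_add: "homogeneous d f \<Longrightarrow> homogeneous d g \<Longrightarrow> homogeneous d (f + g)"
  unfolding homogeneous_def
proof (intro ballI)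
  fix m assume "\<forall>m\<in>ks f. mdeg m = d" "\<forall>m\<in>ks g. mdeg m = d" "m \<in> ks (f + g)"
  then show "mdeg m = d" using keys_add[of f g] by auto
qed

lemma homog_minus: "homogeneous d f \<Longrightarrow> homogeneous d (- f)"
  unfolding homogeneous_def by (simp add: keys_minus)

lemma homog_diff: "homogeneous d f \<Longrightarrow> homogeneous d g \<Longrightarrow> homogeneous d (f - g)"
  using homog_add[of d f "-g"] homog_minus[of d g] by simp

lemma homog_mult: "homogeneous d f \<Longrightarrow> homogeneous e g \<Longrightarrow> homogeneous (d + e) (f * g)"
  unfolding homogeneous_def using keys_mult[of f g] by (force simp: mdeg_add)

lemma homog_const: "homogeneous 0 (const c)"
  by (simp add: homogeneous_def)

lemma homog_var: "homogeneous 1 (var j)"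
  by (simp add: homogeneous_def var_def)

lemma homog_varpair: "homogeneous 1 (var a - var b)"
  by (intro homog_diff homog_var)

lemma homog_prod: "(\<And>x. x \<in> A \<Longrightarrow> homogeneous (D x) (F x)) \<Longrightarrow> homogeneous (\<Sum>x\<in>A. D x) (\<Prod>x\<in>A. F x)"
proof (induction A rule: infinite_finite_induct)
  case (infinite A) then show ?case using homog_const[of 1] by simp
next
  case empty then show ?case using homog_const[of 1] by simp
next
  case (insert x F) then show ?case by (simp add: homog_mult)
qed

lemma homog_perm:
  assumes "bij u" "homogeneous d f" shows "homogeneous d (perm_poly u f)"
  unfolding homogeneous_def
proof (intro ballI)
  fix m assume "m \<in> ks (perm_poly u f)"
  then have "Poly_Mapping.map_key u m \<in> ks f" by (simp add: in_keys_iff lookup_perm[OF assms(1)])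
  then have "mdeg (Poly_Mapping.map_key u m) = d" using assms(2) homogeneous_def by blast
  then show "mdeg m = d" by (simp add: mdeg_map_key[OF assms(1)])
qed

text \<open>homogeneous components\<close>

definition hc :: "nat \<Rightarrow> cpoly \<Rightarrow> cpoly" where
  "hc k f = Abs_poly_mapping (\<lambda>m. if mdeg m = k then lk f m else 0)"

lemma lookup_hc: "lk (hc k f) m = (if mdeg m = k then lk f m else 0)"
proof -
  have "finite {m. (if mdeg m = k then lk f m else 0) \<noteq> 0}"
    by (rule finite_subset[of _ "ks f"]) (auto simp: in_keys_iff split: if_splits)
  then show ?thesis unfolding hc_def by (subst Abs_poly_mapping_inverse) auto
qed

lemma hc_add: "hc k (f + g) = hc k f + hc k g"
  by (rule poly_mapping_eqI) (simp add: lookup_hc lookup_add)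

lemma hc_zero: "hc k 0 = 0"
  by (rule poly_mapping_eqI) (simp add: lookup_hc)

lemma hc_sum: "hc k (\<Sum>x\<in>A. F x) = (\<Sum>x\<in>A. hc k (F x))"
proof (induction A rule: infinite_finite_induct)
  case (infinite A) then show ?case by (simp add: hc_zero)
next
  case empty then show ?case by (simp add: hc_zero)
next
  case (insert x F) then show ?case by (simp add: hc_add)
qed

lemma hc_homog: "homogeneous d g \<Longrightarrow> hc k g = (if k = d then g else 0)"
  by (rule poly_mapping_eqI) (auto simp: lookup_hc homogeneous_def in_keys_iff)

lemma homog_hc: "homogeneous k (hc k f)"
  unfolding homogeneous_def
proof (intro ballI)
  fix m assume "m \<in> ks (hc k f)"
  then have "lk (hc k f) m \<noteq> 0" by (simp add: in_keys_iff)
  then show "mdeg m = k" by (simp add: lookup_hc split: if_splits)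
qed

lemma hc_expand:
  assumes D: "finite D" "mdeg ` ks f \<subseteq> D"
  shows "f = (\<Sum>k\<in>D. hc k f)"
proof (rule poly_mapping_eqI)
  fix m
  have "lk (\<Sum>k\<in>D. hc k f) m = (\<Sum>k\<in>D. if mdeg m = k then lk f m else 0)"
    by (simp add: lookup_sum lookup_hc)
  also have "\<dots> = lk f m"
  proof (cases "m \<in> ks f")
    case True then have "mdeg m \<in> D" using D by auto
    then show ?thesis using D by (simp add: sum.delta')
  next
    case False then have "lk f m = 0" by (simp add: in_keys_iff)
    then show ?thesis by (simp add: sum.neutral)
  qed
  finally show "lk f m = lk (\<Sum>k\<in>D. hc k f) m" by simp
qed

lemma hc_mult_homog:
  assumes "homogeneous e h"
  shows "hc (e + k) (h * r) = h * hc k r"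
proof -
  let ?D = "insert k (mdeg ` ks r)"
  have fin: "finite ?D" by simp
  have "h * r = (\<Sum>j\<in>?D. h * hc j r)"
    by (subst hc_expand[OF fin, of r]) (auto simp: sum_distrib_left)
  then have "hc (e + k) (h * r) = (\<Sum>j\<in>?D. hc (e + k) (h * hc j r))"
    by (simp add: hc_sum)
  also have "\<dots> = (\<Sum>j\<in>?D. if j = k then h * hc k r else 0)"
  proof (rule sum.cong[OF refl])
    fix j
    have "homogeneous (e + j) (h * hc j r)" by (intro homog_mult assms homog_hc)
    then show "hc (e + k) (h * hc j r) = (if j = k then h * hc k r else 0)"
      by (simp add: hc_homog)
  qed
  also have "\<dots> = h * hc k r" by simp
  finally show ?thesis .
qed

lemma homog_div:
  assumes "homogeneous e h" "h \<noteq> 0" "homogeneous d (h * r)" "r \<noteq> 0"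
  shows "homogeneous (d - e) r \<and> e \<le> d"
proof -
  have key: "e + mdeg m = d" if m: "m \<in> ks r" for m
  proof (rule ccontr)
    assume ne: "e + mdeg m \<noteq> d"
    have "hc (e + mdeg m) (h * r) = 0" using assms(3) ne by (simp add: hc_homog)
    then have "h * hc (mdeg m) r = 0" by (simp add: hc_mult_homog[OF assms(1)])
    moreover have "hc (mdeg m) r \<noteq> 0"
    proof
      assume "hc (mdeg m) r = 0"
      then have "lk (hc (mdeg m) r) m = 0" by simp
      then show False using m by (simp add: lookup_hc in_keys_iff)
    qed
    ultimately show False using assms(2) by simp
  qed
  obtain m where "m \<in> ks r" using assms(4) by (metis keys_eq_empty ex_in_conv)
  then have "e \<le> d" using key by fastforce
  moreover have "homogeneous (d - e) r" unfolding homogeneous_def using key by fastforce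
  ultimately show ?thesis by simp
qed

lemma homog_nonzero_unique:
  "homogeneous d f \<Longrightarrow> homogeneous e f \<Longrightarrow> f \<noteq> 0 \<Longrightarrow> d = e"
  unfolding homogeneous_def by (metis keys_eq_empty ex_in_conv)



definition IP :: "nat \<Rightarrow> (nat \<Rightarrow> nat) \<Rightarrow> (nat \<times> nat) set" where
  "IP n u = {(a, b). 1 \<le> a \<and> a < b \<and> b \<le> n \<and> inv u a > inv u b}"

lemma IP_finite: "finite (IP n u)"
  by (rule finite_subset[of _ "{1..n} \<times> {1..n}"]) (auto simp: IP_def)

lemma IP_lt: "(a, b) \<in> IP n u \<Longrightarrow> a < b" by (simp add: IP_def)

lemma sg1_inj: "sg (x::nat) (1::nat) = sg y 1 \<longleftrightarrow> x = y"
proof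
  assume "sg x (1::nat) = sg y 1"
  then have "lk (sg x (1::nat)) x = lk (sg y 1) x" by simp
  then show "x = y" by (cases "x = y") (simp_all add: lookup_single_not_eq)
qed simp

lemma sg1_inj': "sg (x::nat) (Suc 0) = sg y (Suc 0) \<longleftrightarrow> x = y"
  using sg1_inj by simp

lemma lk_var_sg: "lk (var x) (sg y 1) = (if x = y then 1 else 0)"
  by (auto simp: lookup_var sg1_inj')

lemma lk_var_sg': "lk (var x) (sg y (Suc 0)) = (if x = y then 1 else 0)"
  using lk_var_sg by simp

lemma varpair_inj:
  assumes "a \<noteq> b" "c \<noteq> d" "var a - var b = var c - var d"
  shows "a = c \<and> b = d"
proof -
  have "lk (var a - var b) (sg a 1) = lk (var c - var d) (sg a 1)" using assms(3) by simp
  then have e1: "(1::complex) = (if c = a then 1 else 0) - (if d = a then 1 else 0)"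
    using assms(1) by (simp add: lookup_minus lk_var_sg lk_var_sg')
  have ca: "c = a"
  proof (rule ccontr)
    assume "c \<noteq> a" then show False using e1 by (cases "d = a") simp_all
  qed
  have "lk (var a - var b) (sg b 1) = lk (var c - var d) (sg b 1)" using assms(3) by simp
  then have e2: "(-1::complex) = (if c = b then 1 else 0) - (if d = b then 1 else 0)"
    using assms(1) by (simp add: lookup_minus lk_var_sg lk_var_sg')
  have db: "d = b"
  proof (rule ccontr)
    assume "d \<noteq> b" then show False using e2 by (cases "c = b") simp_all
  qed
  show ?thesis using ca db by simp
qed

lemma Inv_IP: "Inv n u = (\<lambda>(a, b). var a - var b) ` IP n u"
  by (auto simp: Inv_def IP_def)

lemma inj_IP: "inj_on (\<lambda>(a, b). var a - var b) (IP n u)"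
proof (rule inj_onI)
  fix p q assume "p \<in> IP n u" "q \<in> IP n u" "(\<lambda>(a, b). var a - var b) p = (\<lambda>(a, b). var a - var b) q"
  moreover obtain a b where ab: "p = (a, b)" by force
  moreover obtain c d where cd: "q = (c, d)" by force
  ultimately have "a < b" "c < d" "var a - var b = var c - var d" by (simp_all add: IP_def)
  then have "a = c \<and> b = d" by (intro varpair_inj) simp_all
  then show "p = q" using ab cd by simp
qed

lemma len_IP: "len n u = card (IP n u)"
  unfolding len_def Inv_IP by (rule card_image[OF inj_IP])

lemma prod_Inv: "(\<Prod>\<beta>\<in>Inv n u. \<beta>) = (\<Prod>(a, b)\<in>IP n u. var a - var b)"
  unfolding Inv_IP by (subst prod.reindex[OF inj_IP]) (simp add: case_prod_beta o_def)

lemma Sn_perm: "u \<in> Sn n \<longleftrightarrow> u permutes {1..n}" by (simp add: Sn_def)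

lemma Sn_bij: "u \<in> Sn n \<Longrightarrow> bij u" by (simp add: Sn_def permutes_bij)

lemma Sn_transpose: "1 \<le> j \<Longrightarrow> j \<le> n \<Longrightarrow> 1 \<le> k \<Longrightarrow> k \<le> n \<Longrightarrow> u \<in> Sn n \<Longrightarrow> transpose j k \<circ> u \<in> Sn n"
  by (simp add: Sn_def permutes_compose permutes_swap_id)

lemma Sn_transpose_iff:
  assumes "1 \<le> j" "j \<le> n" "1 \<le> k" "k \<le> n"
  shows "transpose j k \<circ> u \<in> Sn n \<longleftrightarrow> u \<in> Sn n"
proof
  assume "transpose j k \<circ> u \<in> Sn n"
  then have "transpose j k \<circ> (transpose j k \<circ> u) \<in> Sn n" using assms Sn_transpose by blast
  moreover have "transpose j k \<circ> (transpose j k \<circ> u) = u" by (simp add: o_assoc)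
  ultimately show "u \<in> Sn n" by simp
qed (use assms Sn_transpose in blast)

lemma inv_transpose_comp: "bij u \<Longrightarrow> inv (transpose j k \<circ> u) = inv u \<circ> transpose j k"
  by (simp add: o_inv_distrib)

lemma inv_inj: "bij u \<Longrightarrow> inv u a = inv u b \<longleftrightarrow> a = b"
  by (metis bij_inv_eq_iff)

lemma len_transpose_less:
  assumes u: "u \<in> Sn n" and jk: "1 \<le> j" "j < k" "k \<le> n" and x: "inv u j < inv u k"
  shows "len n u < len n (transpose j k \<circ> u)"
proof -
  let ?t = "transpose j k"
  define X where "X = inv u"
  have b: "bij u" using u Sn_bij by blast
  have X': "inv (?t \<circ> u) = X \<circ> ?t" unfolding X_def by (rule inv_transpose_comp[OF b])
  define mid where "mid = (\<lambda>a::nat. j < a \<and> a < k)"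
  define g where "g = (\<lambda>(a::nat, b::nat). if mid a \<or> mid b then (a, b) else (?t a, ?t b))"
  have xjk: "X j < X k" using x X_def by simp
  have IPu: "IP n u = {(a, b). 1 \<le> a \<and> a < b \<and> b \<le> n \<and> X a > X b}" by (simp add: IP_def X_def)
  have IPt: "IP n (?t \<circ> u) = {(a, b). 1 \<le> a \<and> a < b \<and> b \<le> n \<and> X (?t a) > X (?t b)}"
    by (simp add: IP_def X')
  have jkin: "(j, k) \<in> IP n (?t \<circ> u)" using jk xjk by (simp add: IPt)
  have maps: "g p \<in> IP n (?t \<circ> u) - {(j, k)}" if p: "p \<in> IP n u" for p
  proof -
    obtain a b where ab: "p = (a, b)" by force
    have a: "1 \<le> a" "a < b" "b \<le> n" "X a > X b" using p ab by (auto simp: IPu)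
    show ?thesis
    proof (cases "mid a \<or> mid b")
      case True
      then have g: "g p = (a, b)" by (simp add: g_def ab)
      have "X (?t a) > X (?t b)"
      proof (cases "mid a")
        case True
        then have ta: "?t a = a" by (auto simp: mid_def)
        show ?thesis
        proof (cases "b = k")
          case True then show ?thesis using ta a xjk by simp
        next
          case False then have "?t b = b" using True a \<open>mid a\<close> by (auto simp: mid_def)
          then show ?thesis using ta a by simp
        qed
      next
        case False
        then have mb: "mid b" using \<open>mid a \<or> mid b\<close> by simp
        then have tb: "?t b = b" by (auto simp: mid_def)
        show ?thesis
        proof (cases "a = j")
          case True then show ?thesis using tb a xjk by simp
        next
          case False then have "?t a = a" using mb a by (auto simp: mid_def)
          then show ?thesis using tb a by simp
        qed
      qed
      moreover have "(a, b) \<noteq> (j, k)" using True by (auto simp: mid_def)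
      ultimately show ?thesis using g a by (simp add: IPt)
    next
      case False
      then have g: "g p = (?t a, ?t b)" by (simp add: g_def ab)
      have nab: "(a, b) \<noteq> (j, k)" using a xjk by auto
      have lt: "?t a < ?t b" using False a nab jk unfolding mid_def transpose_def by auto
      have r: "1 \<le> ?t a" "?t b \<le> n" using a jk unfolding transpose_def by auto
      have "(?t a, ?t b) \<noteq> (j, k)" using a jk unfolding transpose_def by auto
      then show ?thesis using g lt r a by (simp add: IPt)
    qed
  qed
  have inj: "inj_on g (IP n u)"
  proof (rule inj_onI)
    fix p q assume p: "p \<in> IP n u" and q: "q \<in> IP n u" and e: "g p = g q"
    obtain a b where ab: "p = (a, b)" by force
    obtain c d where cd: "q = (c, d)" by force
    show "p = q"
    proof (cases "mid a \<or> mid b")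
      case True
      show ?thesis
      proof (cases "mid c \<or> mid d")
        case True then show ?thesis using \<open>mid a \<or> mid b\<close> e ab cd by (simp add: g_def)
      next
        case False
        then have "(a, b) = (?t c, ?t d)" using \<open>mid a \<or> mid b\<close> e ab cd by (simp add: g_def)
        then have "c = ?t a" "d = ?t b" by auto
        then have "mid c \<or> mid d" using \<open>mid a \<or> mid b\<close> unfolding mid_def transpose_def by auto
        then show ?thesis using False by simp
      qed
    next
      case False
      show ?thesis
      proof (cases "mid c \<or> mid d")
        case True
        then have "(c, d) = (?t a, ?t b)" using False e ab cd by (simp add: g_def)
        then have "a = ?t c" "b = ?t d" by auto
        then have "mid a \<or> mid b" using True unfolding mid_def transpose_def by auto
        then show ?thesis using False by simp
      next
        case False2: False
        then have "(?t a, ?t b) = (?t c, ?t d)" using False e ab cd by (simp add: g_def)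
        then show ?thesis using ab cd by (auto dest: transpose_eq_imp_eq)
      qed
    qed
  qed
  have "card (IP n u) = card (g ` IP n u)" using inj by (simp add: card_image)
  also have "\<dots> \<le> card (IP n (?t \<circ> u) - {(j, k)})"
  proof (rule card_mono)
    show "finite (IP n (?t \<circ> u) - {(j, k)})" using IP_finite by simp
    show "g ` IP n u \<subseteq> IP n (?t \<circ> u) - {(j, k)}" by (rule image_subsetI) (rule maps)
  qed
  also have "\<dots> < card (IP n (?t \<circ> u))"
    by (rule card_Diff1_less[OF IP_finite jkin])
  finally show ?thesis by (simp add: len_IP)
qed

lemma len_transpose_greater:
  assumes u: "u \<in> Sn n" and jk: "1 \<le> j" "j < k" "k \<le> n" and x: "inv u j > inv u k"
  shows "len n (transpose j k \<circ> u) < len n u"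
proof -
  let ?t = "transpose j k"
  have b: "bij u" using u Sn_bij by blast
  have u': "?t \<circ> u \<in> Sn n" using u jk by (intro Sn_transpose) auto
  have "inv (?t \<circ> u) j < inv (?t \<circ> u) k" using x by (simp add: inv_transpose_comp[OF b])
  then have "len n (?t \<circ> u) < len n (?t \<circ> (?t \<circ> u))" using len_transpose_less[OF u' jk] by blast
  moreover have "?t \<circ> (?t \<circ> u) = u" by (simp add: o_assoc)
  ultimately show ?thesis by simp
qed



lemma transpose_conj:
  "transpose a b \<circ> transpose j k = transpose (transpose a b j) (transpose a b k) \<circ> transpose a b"
  by (rule ext) (auto simp: transpose_def)

lemma bruhat_step_len: "bruhat_step n z z' \<Longrightarrow> len n z < len n z'"
  by (auto simp: bruhat_step_def)

lemma rtrancl_len: "(bruhat_step n)\<^sup>*\<^sup>* a b \<Longrightarrow> a = b \<or> len n a < len n b"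
  by (induction rule: rtranclp_induct) (auto dest: bruhat_step_len)

lemma bruhat_le_len: "bruhat_le n a b \<Longrightarrow> len n a \<le> len n b"
  unfolding bruhat_le_def using rtrancl_len by fastforce

lemma bruhat_le_len_strict: "bruhat_le n a b \<Longrightarrow> a \<noteq> b \<Longrightarrow> len n a < len n b"
  unfolding bruhat_le_def using rtrancl_len by fastforce

lemma bruhat_le_Sn: "bruhat_le n a b \<Longrightarrow> a \<in> Sn n \<and> b \<in> Sn n"
  by (simp add: bruhat_le_def)

lemma bruhat_le_refl: "a \<in> Sn n \<Longrightarrow> bruhat_le n a a"
  by (simp add: bruhat_le_def)

lemma bruhat_le_trans: "bruhat_le n a b \<Longrightarrow> bruhat_le n b c \<Longrightarrow> bruhat_le n a c"
  unfolding bruhat_le_def by (meson rtranclp_trans)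

lemma step_of:
  assumes "z \<in> Sn n" "1 \<le> j" "j < k" "k \<le> n" "inv z j < inv z k"
  shows "bruhat_le n z (transpose j k \<circ> z)"
proof -
  have "bruhat_step n z (transpose j k \<circ> z)"
    unfolding bruhat_step_def using assms len_transpose_less by blast
  moreover have "transpose j k \<circ> z \<in> Sn n" using assms by (intro Sn_transpose) auto
  ultimately show ?thesis using assms(1) by (simp add: bruhat_le_def)
qed

lemma step_inv:
  assumes "z \<in> Sn n" "bruhat_step n z z'"
  obtains j k where "1 \<le> j" "j < k" "k \<le> n" "z' = transpose j k \<circ> z" "inv z j < inv z k"
proof -
  obtain j k where jk: "1 \<le> j" "j < k" "k \<le> n" "z' = transpose j k \<circ> z" "len n z < len n z'"
    using assms(2) by (auto simp: bruhat_step_def)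
  have "inv z j \<noteq> inv z k" using inv_inj[OF Sn_bij[OF assms(1)], of j k] jk(2) by simp
  moreover have "\<not> inv z j > inv z k"
    using len_transpose_greater[OF assms(1) jk(1-3)] jk(4,5) by auto
  ultimately have "inv z j < inv z k" by simp
  then show ?thesis using that jk by blast
qed

context
  fixes n i :: nat
  assumes i1: "1 \<le> i" and i2: "Suc i \<le> n"
begin

abbreviation s where "s \<equiv> sref i"
abbreviation \<alpha> where "\<alpha> \<equiv> (i, Suc i)"

lemma s_perm: "s permutes {1..n}"
  unfolding sref_def using i1 i2 by (intro permutes_swap_id) auto

lemma s_bij: "bij s" by (simp add: sref_def)

lemma s_ss[simp]: "s (s x) = x" by (simp add: sref_def)

lemma s_comp_ss: "s \<circ> (s \<circ> u) = u" by (rule ext) simp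

lemma s_Sn: "u \<in> Sn n \<Longrightarrow> s \<circ> u \<in> Sn n"
  unfolding sref_def using i1 i2 by (intro Sn_transpose) auto

lemma s_Sn_iff: "s \<circ> u \<in> Sn n \<longleftrightarrow> u \<in> Sn n"
  using s_Sn s_comp_ss by metis

lemma inv_s_comp: "u \<in> Sn n \<Longrightarrow> inv (s \<circ> u) = inv u \<circ> s"
  unfolding sref_def by (rule inv_transpose_comp[OF Sn_bij])

lemma inv_s: "inv s = s" by (simp add: sref_def)

lemma alpha_IP: "\<alpha> \<in> IP n u \<longleftrightarrow> inv u i > inv u (Suc i)"
  using i1 i2 by (simp add: IP_def)

lemma alpha_IP_s:
  assumes "u \<in> Sn n" shows "\<alpha> \<in> IP n (s \<circ> u) \<longleftrightarrow> \<alpha> \<notin> IP n u"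
proof -
  have "inv u i \<noteq> inv u (Suc i)" using inv_inj[OF Sn_bij[OF assms]] by simp
  moreover have "inv (s \<circ> u) i = inv u (Suc i)" "inv (s \<circ> u) (Suc i) = inv u i"
    by (simp_all add: inv_s_comp[OF assms]) (simp_all add: sref_def)
  ultimately show ?thesis by (auto simp: alpha_IP)
qed

lemma IP_s_maps:
  assumes "u \<in> Sn n" "p \<in> IP n u - {\<alpha>}"
  shows "(\<lambda>(a, b). (s a, s b)) p \<in> IP n (s \<circ> u) - {\<alpha>}"
proof -
  obtain a b where ab: "p = (a, b)" by force
  have a: "1 \<le> a" "a < b" "b \<le> n" "inv u a > inv u b" "(a, b) \<noteq> \<alpha>" using assms(2) ab by (auto simp: IP_def)
  have "s a < s b" using a unfolding sref_def transpose_def by auto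
  moreover have "1 \<le> s a" "s b \<le> n" using a i1 i2 unfolding sref_def transpose_def by auto
  moreover have "(s a, s b) \<noteq> \<alpha>" using a unfolding sref_def transpose_def by auto
  ultimately show ?thesis using a ab by (simp add: IP_def inv_s_comp[OF assms(1)])
qed

lemma IP_s_bij:
  assumes "u \<in> Sn n"
  shows "bij_betw (\<lambda>(a, b). (s a, s b)) (IP n u - {\<alpha>}) (IP n (s \<circ> u) - {\<alpha>})"
proof (rule bij_betw_byWitness[where f' = "\<lambda>(a, b). (s a, s b)"])
  show "\<forall>p\<in>IP n u - {\<alpha>}. (\<lambda>(a, b). (s a, s b)) ((\<lambda>(a, b). (s a, s b)) p) = p" by auto
  show "\<forall>p\<in>IP n (s \<circ> u) - {\<alpha>}. (\<lambda>(a, b). (s a, s b)) ((\<lambda>(a, b). (s a, s b)) p) = p" by auto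
  show "(\<lambda>(a, b). (s a, s b)) ` (IP n u - {\<alpha>}) \<subseteq> IP n (s \<circ> u) - {\<alpha>}"
    using IP_s_maps[OF assms] by (intro image_subsetI)
  have "(\<lambda>(a, b). (s a, s b)) ` (IP n (s \<circ> u) - {\<alpha>}) \<subseteq> IP n (s \<circ> (s \<circ> u)) - {\<alpha>}"
    using IP_s_maps[OF s_Sn[OF assms]] by (intro image_subsetI)
  then show "(\<lambda>(a, b). (s a, s b)) ` (IP n (s \<circ> u) - {\<alpha>}) \<subseteq> IP n u - {\<alpha>}"
    by (simp add: s_comp_ss)
qed

lemma card_IP_s: "u \<in> Sn n \<Longrightarrow> card (IP n u - {\<alpha>}) = card (IP n (s \<circ> u) - {\<alpha>})"
  using IP_s_bij bij_betw_same_card by blast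

lemma len_s_down:
  assumes "u \<in> Sn n" "\<alpha> \<in> IP n u" shows "len n (s \<circ> u) + 1 = len n u"
proof -
  have "\<alpha> \<notin> IP n (s \<circ> u)" using alpha_IP_s assms by blast
  then have "card (IP n (s \<circ> u)) = card (IP n u - {\<alpha>})" using card_IP_s[OF assms(1)] by simp
  also have "\<dots> = card (IP n u) - 1" using assms(2) by simp
  finally have e: "card (IP n (s \<circ> u)) = card (IP n u) - 1" .
  have "card (IP n u) > 0" using assms(2) IP_finite card_gt_0_iff by blast
  then show ?thesis using e by (simp add: len_IP)
qed

lemma len_s_up:
  assumes "u \<in> Sn n" "\<alpha> \<notin> IP n u" shows "len n (s \<circ> u) = len n u + 1"
proof -
  have "\<alpha> \<in> IP n (s \<circ> u)" using alpha_IP_s assms by blast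
  then have "len n (s \<circ> (s \<circ> u)) + 1 = len n (s \<circ> u)" using len_s_down s_Sn assms by blast
  then show ?thesis by (simp add: s_comp_ss)
qed

lemma prod_IP_s:
  assumes "u \<in> Sn n" "\<alpha> \<in> IP n u"
  shows "perm_poly s (\<Prod>\<beta>\<in>Inv n u. \<beta>) = - (var i - var (Suc i)) * (\<Prod>\<beta>\<in>Inv n (s \<circ> u). \<beta>)"
proof -
  let ?F = "\<lambda>(a::nat, b::nat). var a - var b"
  let ?h = "\<lambda>(a::nat, b::nat). (s a, s b)"
  have H: "ishom (perm_poly s)" by (rule perm_ishom[OF s_bij])
  have "perm_poly s (\<Prod>\<beta>\<in>Inv n u. \<beta>) = (\<Prod>p\<in>IP n u. perm_poly s (?F p))"
    by (simp add: prod_Inv hom_prod[OF H])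
  also have "\<dots> = (\<Prod>p\<in>IP n u. ?F (?h p))"
    by (rule prod.cong[OF refl]) (auto simp: hom_diff[OF H] perm_var[OF s_bij])
  also have "\<dots> = ?F (?h \<alpha>) * (\<Prod>p\<in>IP n u - {\<alpha>}. ?F (?h p))"
    using assms(2) IP_finite by (simp add: prod.remove)
  also have "(\<Prod>p\<in>IP n u - {\<alpha>}. ?F (?h p)) = (\<Prod>p\<in>IP n (s \<circ> u) - {\<alpha>}. ?F p)"
    by (rule prod.reindex_bij_betw[OF IP_s_bij[OF assms(1)]])
  also have "IP n (s \<circ> u) - {\<alpha>} = IP n (s \<circ> u)"
    using alpha_IP_s[OF assms(1)] assms(2) by simp
  also have "?F (?h \<alpha>) = - (var i - var (Suc i))" by (simp add: sref_def)
  finally show ?thesis by (subst prod_Inv[of n "s \<circ> u"])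
qed

lemma s_down_le:
  assumes u: "u \<in> Sn n" and na: "\<alpha> \<notin> IP n u" shows "bruhat_le n u (s \<circ> u)"
proof -
  have "inv u i \<noteq> inv u (Suc i)" using inv_inj[OF Sn_bij[OF u]] by simp
  then have "inv u i < inv u (Suc i)" using na alpha_IP by simp
  then show ?thesis unfolding sref_def using i1 i2 by (intro step_of[OF u]) auto
qed

lemma s_up_le: "u \<in> Sn n \<Longrightarrow> \<alpha> \<in> IP n u \<Longrightarrow> bruhat_le n (s \<circ> u) u"
  using s_down_le[of "s \<circ> u"] alpha_IP_s s_Sn s_comp_ss by metis

lemma bruhat_lt_s: "u \<in> Sn n \<Longrightarrow> bruhat_lt n (s \<circ> u) u \<longleftrightarrow> \<alpha> \<in> IP n u"
proof
  assume u: "u \<in> Sn n" and "bruhat_lt n (s \<circ> u) u"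
  then have "len n (s \<circ> u) < len n u" by (simp add: bruhat_lt_def bruhat_le_len_strict)
  then show "\<alpha> \<in> IP n u" using len_s_up[OF u] by fastforce
next
  assume u: "u \<in> Sn n" and a: "\<alpha> \<in> IP n u"
  have "s \<circ> u \<noteq> u" using alpha_IP_s[OF u] a by auto
  then show "bruhat_lt n (s \<circ> u) u" using s_up_le[OF u a] by (simp add: bruhat_lt_def)
qed

end



lemma rtrancl_Sn: "(bruhat_step n)\<^sup>*\<^sup>* a b \<Longrightarrow> a \<in> Sn n \<Longrightarrow> b \<in> Sn n"
  by (induction rule: rtranclp_induct) (auto simp: bruhat_step_def intro: Sn_transpose)

context
  fixes n i :: nat
  assumes i1: "1 \<le> i" and i2: "Suc i \<le> n"
begin

definition phi :: "(nat \<Rightarrow> nat) \<Rightarrow> (nat \<Rightarrow> nat)" where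
  "phi z = (if (i, Suc i) \<in> IP n z then sref i \<circ> z else z)"

lemma phi_Sn: "z \<in> Sn n \<Longrightarrow> phi z \<in> Sn n"
  by (simp add: phi_def s_Sn[OF i1 i2])

lemma phi_step:
  assumes z: "z \<in> Sn n" and jk: "1 \<le> j" "j < k" "k \<le> n" and x: "inv z j < inv z k"
  shows "bruhat_le n (phi z) (phi (transpose j k \<circ> z))"
proof -
  let ?t = "transpose j k"
  let ?s = "sref i"
  define X where "X = inv z"
  have bz: "bij z" using z Sn_bij by blast
  have z': "?t \<circ> z \<in> Sn n" using z jk by (intro Sn_transpose) auto
  have X': "inv (?t \<circ> z) = X \<circ> ?t" unfolding X_def by (rule inv_transpose_comp[OF bz])
  have Xinj: "X a = X b \<longleftrightarrow> a = b" for a b unfolding X_def using inv_inj[OF bz] by blast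
  have xjk: "X j < X k" using x X_def by simp
  have dz: "(i, Suc i) \<in> IP n z \<longleftrightarrow> X (Suc i) < X i" using alpha_IP[OF i1 i2] X_def by simp
  have dz': "(i, Suc i) \<in> IP n (?t \<circ> z) \<longleftrightarrow> X (?t (Suc i)) < X (?t i)"
    using alpha_IP[OF i1 i2, of "?t \<circ> z"] X' by simp
  have invsz: "inv (?s \<circ> z) = X \<circ> ?s" using inv_s_comp[OF i1 i2 z] X_def by simp
  have stp: "bruhat_le n z (?t \<circ> z)" using step_of[OF z jk x] .
  show ?thesis
  proof (cases "(i, Suc i) \<in> IP n z")
    case True
    note dT = True
    show ?thesis
    proof (cases "(i, Suc i) \<in> IP n (?t \<circ> z)")
      case True
      have ne: "(j, k) \<noteq> (i, Suc i)"
      proof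
        assume "(j, k) = (i, Suc i)"
        then have "?t \<circ> z = ?s \<circ> z" by (simp add: sref_def)
        then show False using True dT alpha_IP_s[OF i1 i2 z] by simp
      qed
      have sjk: "?s j < ?s k" using ne jk unfolding sref_def transpose_def by auto
      have sr: "1 \<le> ?s j" "?s k \<le> n" using jk i1 i2 unfolding sref_def transpose_def by auto
      have eq: "?s \<circ> (?t \<circ> z) = transpose (?s j) (?s k) \<circ> (?s \<circ> z)"
        using transpose_conj[of i "Suc i" j k] by (simp add: sref_def o_assoc)
      have "inv (?s \<circ> z) (?s j) < inv (?s \<circ> z) (?s k)" using xjk invsz by (simp add: s_ss[OF i1 i2])
      then have "bruhat_le n (?s \<circ> z) (transpose (?s j) (?s k) \<circ> (?s \<circ> z))"
        using step_of[OF s_Sn[OF i1 i2 z] sr(1) sjk sr(2)] by blast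
      then show ?thesis using True dT eq by (simp add: phi_def)
    next
      case False
      have "bruhat_le n (?s \<circ> z) z" using s_up_le[OF i1 i2 z dT] .
      then show ?thesis using False dT stp bruhat_le_trans by (simp add: phi_def)
    qed
  next
    case False
    note dF = False
    have xi: "X i < X (Suc i)" using dF dz Xinj[of i "Suc i"] by auto
    show ?thesis
    proof (cases "(i, Suc i) \<in> IP n (?t \<circ> z)")
      case False
      then show ?thesis using dF stp by (simp add: phi_def)
    next
      case True
      have d': "X (?t (Suc i)) < X (?t i)" using True dz' by simp
      have cases: "(j, k) = (i, Suc i) \<or> (j = i \<and> Suc i < k) \<or> (j < i \<and> k = Suc i)"
      proof -
        have "j = i \<or> j = Suc i \<or> k = i \<or> k = Suc i"
        proof (rule ccontr)
          assume "\<not> ?thesis"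
          then have "?t i = i" "?t (Suc i) = Suc i" by auto
          then show False using d' xi by simp
        qed
        moreover have "j \<noteq> Suc i"
        proof
          assume "j = Suc i"
          then have "?t i = i" "?t (Suc i) = k" using jk by auto
          then show False using d' xi xjk \<open>j = Suc i\<close> by simp
        qed
        moreover have "k \<noteq> i"
        proof
          assume "k = i"
          then have "?t i = j" "?t (Suc i) = Suc i" using jk by auto
          then show False using d' xi xjk \<open>k = i\<close> by simp
        qed
        ultimately show ?thesis using jk by auto
      qed
      have zsz: "bruhat_le n z (?s \<circ> z)" using s_down_le[OF i1 i2 z dF] .
      have phz: "phi z = z" using dF by (simp add: phi_def)
      have phz': "phi (?t \<circ> z) = ?s \<circ> (?t \<circ> z)" using True by (simp add: phi_def)
      show ?thesis
      proof -
        { assume "(j, k) = (i, Suc i)"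
          then have "?s \<circ> (?t \<circ> z) = z" using s_comp_ss[OF i1 i2, of z] by (simp add: sref_def)
          then have ?thesis using phz phz' bruhat_le_refl[OF z] by simp }
        moreover
        { assume a: "j = i" "Suc i < k"
          have eq: "?s \<circ> (?t \<circ> z) = transpose (Suc i) k \<circ> (?s \<circ> z)"
            using transpose_conj[of i "Suc i" i k] a by (simp add: sref_def o_assoc)
          have "inv (?s \<circ> z) (Suc i) < inv (?s \<circ> z) k" using a xjk invsz by (simp add: sref_def)
          then have "bruhat_le n (?s \<circ> z) (transpose (Suc i) k \<circ> (?s \<circ> z))"
            using step_of[OF s_Sn[OF i1 i2 z], of "Suc i" k] a jk by simp
          then have ?thesis using zsz eq phz phz' bruhat_le_trans by metis }
        moreover
        { assume a: "j < i" "k = Suc i"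
          have eq: "?s \<circ> (?t \<circ> z) = transpose j i \<circ> (?s \<circ> z)"
            using transpose_conj[of i "Suc i" j "Suc i"] a by (simp add: sref_def o_assoc)
          have "inv (?s \<circ> z) j < inv (?s \<circ> z) i" using a xjk invsz by (simp add: sref_def)
          then have "bruhat_le n (?s \<circ> z) (transpose j i \<circ> (?s \<circ> z))"
            using step_of[OF s_Sn[OF i1 i2 z], of j i] a jk by simp
          then have ?thesis using zsz eq phz phz' bruhat_le_trans by metis }
        ultimately show ?thesis using cases by blast
      qed
    qed
  qed
qed

lemma phi_mono:
  assumes "bruhat_le n x y" shows "bruhat_le n (phi x) (phi y)"
proof -
  have x: "x \<in> Sn n" and r: "(bruhat_step n)\<^sup>*\<^sup>* x y" using assms by (auto simp: bruhat_le_def)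
  from r show ?thesis
  proof (induction rule: rtranclp_induct)
    case base then show ?case using bruhat_le_refl phi_Sn x by blast
  next
    case (step y z)
    have y: "y \<in> Sn n" using rtrancl_Sn step.hyps(1) x by blast
    obtain j k where jk: "1 \<le> j" "j < k" "k \<le> n" "z = transpose j k \<circ> y" "inv y j < inv y k"
      using step_inv[OF y step.hyps(2)] by blast
    have "bruhat_le n (phi y) (phi z)" using phi_step[OF y jk(1-3) jk(5)] jk(4) by simp
    then show ?case using step.IH bruhat_le_trans by blast
  qed
qed

lemma lift_A:
  assumes v: "(i, Suc i) \<in> IP n v" and u: "u \<in> Sn n" and le: "bruhat_le n v (sref i \<circ> u)"
  shows "bruhat_le n (sref i \<circ> v) u"
proof -
  have vS: "v \<in> Sn n" using le bruhat_le_Sn by blast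
  have pv: "phi v = sref i \<circ> v" using v by (simp add: phi_def)
  have m: "bruhat_le n (sref i \<circ> v) (phi (sref i \<circ> u))" using phi_mono[OF le] pv by simp
  show ?thesis
  proof (cases "(i, Suc i) \<in> IP n (sref i \<circ> u)")
    case True
    then show ?thesis using m by (simp add: phi_def s_comp_ss[OF i1 i2])
  next
    case False
    have "bruhat_le n (sref i \<circ> u) (sref i \<circ> (sref i \<circ> u))"
      using s_down_le[OF i1 i2 s_Sn[OF i1 i2 u] False] .
    then show ?thesis using m False bruhat_le_trans by (simp add: phi_def s_comp_ss[OF i1 i2])
  qed
qed

lemma lift_B:
  assumes v: "(i, Suc i) \<notin> IP n v" and u: "u \<in> Sn n" and le: "bruhat_le n v (sref i \<circ> u)"
  shows "bruhat_le n v u"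
proof -
  have pv: "phi v = v" using v by (simp add: phi_def)
  have m: "bruhat_le n v (phi (sref i \<circ> u))" using phi_mono[OF le] pv by simp
  show ?thesis
  proof (cases "(i, Suc i) \<in> IP n (sref i \<circ> u)")
    case True
    then show ?thesis using m by (simp add: phi_def s_comp_ss[OF i1 i2])
  next
    case False
    have "bruhat_le n (sref i \<circ> u) (sref i \<circ> (sref i \<circ> u))"
      using s_down_le[OF i1 i2 s_Sn[OF i1 i2 u] False] .
    then show ?thesis using m False bruhat_le_trans by (simp add: phi_def s_comp_ss[OF i1 i2])
  qed
qed

end



lemma alpha_neq0: "var i - var (Suc i) \<noteq> 0"
  by (rule var_diff_neq0) simp

lemma divq_eq: "(var i - var (Suc i)) * r = g \<Longrightarrow> divq i g = r"
  unfolding divq_def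
proof (rule the_equality)
  fix r' assume "(var i - var (Suc i)) * r = g" "(var i - var (Suc i)) * r' = g"
  then show "r' = r" using alpha_neq0[of i] by (metis mult_left_cancel)
qed

lemma divq_dvd: "(var i - var (Suc i)) dvd g \<Longrightarrow> (var i - var (Suc i)) * divq i g = g"
  by (metis dvdE divq_eq)

lemma divq_zero: "divq i 0 = 0" using divq_eq[of i 0 0] by simp

lemma HGB_zero_out: "p \<in> HGB n \<Longrightarrow> u \<notin> Sn n \<Longrightarrow> p u = 0"
  by (simp add: HGB_def gkm_on_def)

lemma HGB_polys: "p \<in> HGB n \<Longrightarrow> p u \<in> polys n"
  by (cases "u \<in> Sn n") (auto simp: HGB_def gkm_on_def polys_zero)

lemma HGB_edge:
  assumes "p \<in> HGB n" "u \<in> Sn n" "1 \<le> j" "j < k" "k \<le> n"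
  shows "(var j - var k) dvd (p u - p (transpose j k \<circ> u))"
proof -
  have "transpose j k \<circ> u \<in> Sn n" using assms by (intro Sn_transpose) auto
  then show ?thesis using assms by (auto simp: HGB_def gkm_on_def)
qed

lemma HGB_I:
  assumes "\<And>u. u \<notin> Sn n \<Longrightarrow> p u = 0" "\<And>u. p u \<in> polys n"
    "\<And>u j k. u \<in> Sn n \<Longrightarrow> 1 \<le> j \<Longrightarrow> j < k \<Longrightarrow> k \<le> n \<Longrightarrow> (var j - var k) dvd (p u - p (transpose j k \<circ> u))"
  shows "p \<in> HGB n"
  using assms by (auto simp: HGB_def gkm_on_def)

lemma HGB_diff: "p \<in> HGB n \<Longrightarrow> q \<in> HGB n \<Longrightarrow> (\<lambda>u. p u - q u) \<in> HGB n"
proof (rule HGB_I)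
  fix u j k assume h: "p \<in> HGB n" "q \<in> HGB n" "u \<in> Sn n" "1 \<le> j" "j < k" "k \<le> n"
  have e: "p u - q u - (p (transpose j k \<circ> u) - q (transpose j k \<circ> u)) =
    (p u - p (transpose j k \<circ> u)) - (q u - q (transpose j k \<circ> u))" by simp
  show "(var j - var k) dvd (p u - q u - (p (transpose j k \<circ> u) - q (transpose j k \<circ> u)))"
    unfolding e using HGB_edge[OF h(1) h(3-6)] HGB_edge[OF h(2) h(3-6)] by (rule dvd_diff)
qed (auto simp: HGB_zero_out HGB_polys polys_diff)

lemma HGB_add: "p \<in> HGB n \<Longrightarrow> q \<in> HGB n \<Longrightarrow> (\<lambda>u. p u + q u) \<in> HGB n"
proof (rule HGB_I)
  fix u j k assume h: "p \<in> HGB n" "q \<in> HGB n" "u \<in> Sn n" "1 \<le> j" "j < k" "k \<le> n"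
  have e: "p u + q u - (p (transpose j k \<circ> u) + q (transpose j k \<circ> u)) =
    (p u - p (transpose j k \<circ> u)) + (q u - q (transpose j k \<circ> u))" by simp
  show "(var j - var k) dvd (p u + q u - (p (transpose j k \<circ> u) + q (transpose j k \<circ> u)))"
    unfolding e using HGB_edge[OF h(1) h(3-6)] HGB_edge[OF h(2) h(3-6)] by (rule dvd_add)
qed (auto simp: HGB_zero_out HGB_polys polys_add)

lemma HGB_zero: "(\<lambda>u. 0) \<in> HGB n"
  by (rule HGB_I) (simp_all add: polys_zero)

lemma HGB_smult: "p \<in> HGB n \<Longrightarrow> c \<in> polys n \<Longrightarrow> (\<lambda>u. c * p u) \<in> HGB n"
proof (rule HGB_I)
  fix u j k assume h: "p \<in> HGB n" "c \<in> polys n" "u \<in> Sn n" "1 \<le> j" "j < k" "k \<le> n"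
  have e: "c * p u - c * p (transpose j k \<circ> u) = c * (p u - p (transpose j k \<circ> u))"
    by (simp add: right_diff_distrib)
  show "(var j - var k) dvd (c * p u - c * p (transpose j k \<circ> u))"
    unfolding e using HGB_edge[OF h(1) h(3-6)] by (rule dvd_mult)
qed (auto simp: HGB_zero_out HGB_polys polys_mult)

lemma HGB_sum: "(\<And>v. v \<in> A \<Longrightarrow> P v \<in> HGB n) \<Longrightarrow> (\<lambda>u. \<Sum>v\<in>A. P v u) \<in> HGB n"
proof (induction A rule: infinite_finite_induct)
  case (infinite A) then show ?case using HGB_zero by simp
next
  case empty then show ?case using HGB_zero by simp
next
  case (insert x F)
  then show ?case using HGB_add[of "P x" n "\<lambda>u. \<Sum>v\<in>F. P v u"] by simp
qed

lemma homog_varpair': "homogeneous (Suc 0) (var a - var b)"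
  using homog_varpair by simp

lemma vanishing:
  assumes q: "q \<in> HGB n"
    and h: "\<And>u. q u \<noteq> 0 \<Longrightarrow> \<exists>d. homogeneous d (q u) \<and> d < len n u"
  shows "q u = 0"
proof (induction "len n u" arbitrary: u rule: less_induct)
  case less
  show ?case
  proof (cases "u \<in> Sn n")
    case False then show ?thesis using q HGB_zero_out by blast
  next
    case True
    note u = True
    have dv: "\<forall>(a, b)\<in>IP n u. (var a - var b) dvd q u"
    proof (intro ballI, clarify)
      fix a b assume ab: "(a, b) \<in> IP n u"
      then have ab': "1 \<le> a" "a < b" "b \<le> n" "inv u a > inv u b" by (auto simp: IP_def)
      have "len n (transpose a b \<circ> u) < len n u" using len_transpose_greater[OF u ab'] .
      then have "q (transpose a b \<circ> u) = 0" using less by blast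
      then show "(var a - var b) dvd q u" using HGB_edge[OF q u ab'(1-3)] by simp
    qed
    have "(\<Prod>(a, b)\<in>IP n u. var a - var b) dvd q u"
      by (rule prod_pairs_dvd[OF IP_finite]) (auto simp: IP_def dv)
    then obtain r where r: "q u = (\<Prod>(a, b)\<in>IP n u. var a - var b) * r" by (auto elim: dvdE)
    show ?thesis
    proof (rule ccontr)
      assume nz: "q u \<noteq> 0"
      obtain d where d: "homogeneous d (q u)" "d < len n u" using h[OF nz] by blast
      have hp: "homogeneous (\<Sum>p\<in>IP n u. 1) (\<Prod>(a, b)\<in>IP n u. var a - var b)"
        by (rule homog_prod) (auto simp: homog_varpair')
      have np: "(\<Prod>(a, b)\<in>IP n u. var a - var b) \<noteq> 0"
        using IP_finite by (auto simp: prod_zero_iff var_diff_neq0 IP_def var_inj)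
      have "r \<noteq> 0" using nz r by auto
      then have "card (IP n u) \<le> d" using homog_div[OF hp np _ ] d(1) r by auto
      then show False using d(2) by (simp add: len_IP)
    qed
  qed
qed

lemma homog_all: "\<forall>u. p u \<noteq> 0 \<longrightarrow> homogeneous d (p u) \<Longrightarrow> homogeneous d (p u)"
  by (cases "p u = 0") simp_all

definition isSch :: "nat \<Rightarrow> (nat \<Rightarrow> nat) \<Rightarrow> ((nat \<Rightarrow> nat) \<Rightarrow> cpoly) \<Rightarrow> bool" where
  "isSch n v p \<longleftrightarrow> p \<in> HGB n \<and>
      (\<forall>u. \<not> bruhat_le n v u \<longrightarrow> p u = 0) \<and>
      (\<forall>u. p u \<noteq> 0 \<longrightarrow> homogeneous (len n v) (p u)) \<and>
      p v = (\<Prod>\<beta>\<in>Inv n v. \<beta>)"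

lemma schubert_def': "schubert n v = (THE p. isSch n v p)"
  by (simp add: schubert_def isSch_def)

lemma isSch_unique:
  assumes "isSch n v p1" "isSch n v p2" shows "p1 = p2"
proof -
  let ?q = "\<lambda>u. p1 u - p2 u"
  have q: "?q \<in> HGB n" using assms by (intro HGB_diff) (auto simp: isSch_def)
  have "?q u = 0" for u
  proof (rule vanishing[OF q])
    fix u assume nz: "p1 u - p2 u \<noteq> 0"
    have le: "bruhat_le n v u"
    proof (rule ccontr)
      assume "\<not> bruhat_le n v u"
      then have "p1 u = 0" "p2 u = 0" using assms by (auto simp: isSch_def)
      then show False using nz by simp
    qed
    have "u \<noteq> v" using nz assms by (auto simp: isSch_def)
    then have "len n v < len n u" using le bruhat_le_len_strict by blast
    moreover have "homogeneous (len n v) (p1 u - p2 u)"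
      using assms by (intro homog_diff) (auto simp: isSch_def intro: homog_all)
    ultimately show "\<exists>d. homogeneous d (p1 u - p2 u) \<and> d < len n u" by blast
  qed
  then show ?thesis by auto
qed

lemma isSch_schubert: "isSch n v p \<Longrightarrow> schubert n v = p"
  unfolding schubert_def' using isSch_unique by blast



lemma perm_s_var:
  "perm_poly (sref i) (var j) = var (sref i j)"
  by (rule perm_var) (simp add: sref_def)

lemma Pi_s: "ishom (perm_poly (sref i))"
  by (rule perm_ishom) (simp add: sref_def)

lemma perm_ss: "perm_poly (sref i) (perm_poly (sref i) f) = f"
proof -
  have "sref i \<circ> sref i = id" by (simp add: sref_def)
  then show ?thesis by (simp add: perm_comp sref_def perm_id)
qed

lemma perm_s_alpha: "perm_poly (sref i) (var i - var (Suc i)) = - (var i - var (Suc i))"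
  by (simp add: hom_diff[OF Pi_s] perm_s_var) (simp add: sref_def)

lemma dvd_perm_s: "(var i - var (Suc i)) dvd (f - perm_poly (sref i) f)"
proof (rule good_hom[OF perm_ishom])
  show "bij (sref i)" by (simp add: sref_def)
  fix j
  show "(var i - var (Suc i)) dvd (var j - perm_poly (sref i) (var j))"
  proof (cases "j = i \<or> j = Suc i")
    case True
    then show ?thesis
    proof
      assume "j = i" then show ?thesis by (simp add: perm_s_var) (simp add: sref_def)
    next
      assume j: "j = Suc i"
      have "var j - var (sref i j) = - (var i - var (Suc i))" using j by (simp add: sref_def)
      then have "var j - perm_poly (sref i) (var j) = - (var i - var (Suc i))" by (simp add: perm_s_var)
      then show ?thesis by (metis dvd_minus_iff dvd_refl)
    qed
  next
    case False
    then have "sref i j = j" by (simp add: sref_def)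
    then show ?thesis by (simp add: perm_s_var)
  qed
qed

lemma dd_eq: "(var i - var (Suc i)) * dd i f = f - perm_poly (sref i) f"
  unfolding dd_def by (rule divq_dvd[OF dvd_perm_s])

lemma act_s: "act (sref i) p u = perm_poly (sref i) (p (sref i \<circ> u))"
  by (simp add: act_def sref_def)

context
  fixes n i :: nat
  assumes i1: "1 \<le> i" and i2: "Suc i \<le> n"
begin

lemma alpha_polys: "var i - var (Suc i) \<in> polys n"
  using i1 i2 by (intro polys_diff polys_var) auto

lemma dd_polys: "f \<in> polys n \<Longrightarrow> dd i f \<in> polys n"
  using polys_div[OF alpha_polys alpha_neq0] dd_eq[of i f]
  by (metis polys_diff polys_perm s_perm[OF i1 i2])

lemma D_dvd:
  assumes p: "p \<in> HGB n"
  shows "(var i - var (Suc i)) dvd (p u - act (sref i) p u)"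
proof (cases "u \<in> Sn n")
  case False
  then have "sref i \<circ> u \<notin> Sn n" using s_Sn_iff[OF i1 i2] by blast
  then show ?thesis using False p by (simp add: act_s HGB_zero_out hom_zero[OF Pi_s])
next
  case True
  have e: "p u - act (sref i) p u = (p u - p (sref i \<circ> u)) + (p (sref i \<circ> u) - perm_poly (sref i) (p (sref i \<circ> u)))"
    by (simp add: act_s)
  show ?thesis unfolding e
    by (intro dvd_add dvd_perm_s) (use HGB_edge[OF p True i1, of "Suc i"] i2 in \<open>simp add: sref_def\<close>)
qed

lemma D_eq: "p \<in> HGB n \<Longrightarrow> (var i - var (Suc i)) * Dop i p u = p u - act (sref i) p u"
  unfolding Dop_def by (rule divq_dvd[OF D_dvd])

lemma D_support: "Dop i p u \<noteq> 0 \<Longrightarrow> p u \<noteq> 0 \<or> p (sref i \<circ> u) \<noteq> 0"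
  by (auto simp: Dop_def act_s hom_zero[OF Pi_s] divq_zero)

lemma D_HGB:
  assumes p: "p \<in> HGB n"
  shows "Dop i p \<in> HGB n"
proof (rule HGB_I)
  fix u assume "u \<notin> Sn n"
  then have "sref i \<circ> u \<notin> Sn n" using s_Sn_iff[OF i1 i2] by blast
  then show "Dop i p u = 0" using D_support HGB_zero_out[OF p] \<open>u \<notin> Sn n\<close> by blast
next
  fix u
  have "p u - act (sref i) p u \<in> polys n"
    unfolding act_s by (intro polys_diff HGB_polys[OF p] polys_perm[OF s_perm[OF i1 i2]])
  then show "Dop i p u \<in> polys n"
    using polys_div[OF alpha_polys alpha_neq0] D_eq[OF p, of u] by metis
next
  fix u j k assume u: "u \<in> Sn n" and jk: "1 \<le> j" "j < k" "k \<le> n"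
  let ?a = "var i - var (Suc i)"
  let ?s = "sref i"
  let ?t = "transpose j k"
  have Pi: "ishom (perm_poly ?s)" by (rule perm_ishom) (simp add: sref_def)
  show "(var j - var k) dvd (Dop i p u - Dop i p (?t \<circ> u))"
  proof (cases "(j, k) = (i, Suc i)")
    case True
    then have t: "?t = ?s" by (simp add: sref_def)
    have e1: "?a * Dop i p u = p u - perm_poly ?s (p (?s \<circ> u))" using D_eq[OF p] by (simp add: act_s)
    have e2: "?a * Dop i p (?s \<circ> u) = p (?s \<circ> u) - perm_poly ?s (p u)"
      using D_eq[OF p, of "?s \<circ> u"] by (simp add: act_s s_comp_ss[OF i1 i2])
    have "perm_poly ?s (?a * Dop i p u) = perm_poly ?s (p u) - p (?s \<circ> u)"
      unfolding e1 by (simp add: hom_diff[OF Pi] perm_ss)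
    then have "- ?a * perm_poly ?s (Dop i p u) = - (?a * Dop i p (?s \<circ> u))"
      unfolding e2 by (simp add: hom_mult[OF Pi] perm_s_alpha)
    then have "?a * perm_poly ?s (Dop i p u) = ?a * Dop i p (?s \<circ> u)"
      by (metis minus_mult_left neg_equal_iff_equal)
    then have "perm_poly ?s (Dop i p u) = Dop i p (?s \<circ> u)"
      using alpha_neq0[of i] by (metis mult_left_cancel)
    then have "Dop i p u - Dop i p (?t \<circ> u) = Dop i p u - perm_poly ?s (Dop i p u)" using t by simp
    then show ?thesis using True dvd_perm_s by simp
  next
    case False
    let ?t' = "transpose (?s j) (?s k)"
    have sjk: "?s j < ?s k" using False jk unfolding sref_def transpose_def by auto
    have sr: "1 \<le> ?s j" "?s k \<le> n" using jk i1 i2 unfolding sref_def transpose_def by auto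
    have eq: "?s \<circ> (?t \<circ> u) = ?t' \<circ> (?s \<circ> u)"
      using transpose_conj[of i "Suc i" j k] by (simp add: sref_def o_assoc)
    have g1: "(var j - var k) dvd (p u - p (?t \<circ> u))" by (rule HGB_edge[OF p u jk])
    have g2: "(var (?s j) - var (?s k)) dvd (p (?s \<circ> u) - p (?t' \<circ> (?s \<circ> u)))"
      by (rule HGB_edge[OF p s_Sn[OF i1 i2 u] sr(1) sjk sr(2)])
    have "perm_poly ?s (var (?s j) - var (?s k)) = var j - var k"
      by (simp add: hom_diff[OF Pi] perm_s_var) (simp add: sref_def)
    then have g2': "(var j - var k) dvd perm_poly ?s (p (?s \<circ> u) - p (?s \<circ> (?t \<circ> u)))"
      using hom_dvd[OF Pi g2] eq by simp
    have "?a * (Dop i p u - Dop i p (?t \<circ> u)) =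
      (p u - p (?t \<circ> u)) - perm_poly ?s (p (?s \<circ> u) - p (?s \<circ> (?t \<circ> u)))"
      using D_eq[OF p, of u] D_eq[OF p, of "?t \<circ> u"]
      by (simp add: act_s right_diff_distrib hom_diff[OF Pi])
    then have A: "(var j - var k) dvd ?a * (Dop i p u - Dop i p (?t \<circ> u))"
      using g1 g2' by (simp add: dvd_diff)
    have B: "vsub (sbs j k) ?a \<noteq> 0"
      using False jk by (intro vsub_pair) auto
    show ?thesis by (rule coprime_div[OF _ A B]) (use jk in simp)
  qed
qed

lemma D_homog:
  assumes p: "p \<in> HGB n" and h: "\<forall>u. p u \<noteq> 0 \<longrightarrow> homogeneous d (p u)" and nz: "Dop i p u \<noteq> 0"
  shows "homogeneous (d - 1) (Dop i p u) \<and> 1 \<le> d"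
proof -
  have "homogeneous d (p u - act (sref i) p u)"
    unfolding act_s using h by (intro homog_diff homog_perm homog_all) (simp_all add: sref_def)
  then have "homogeneous d ((var i - var (Suc i)) * Dop i p u)" using D_eq[OF p] by simp
  then show ?thesis using homog_div[OF homog_varpair alpha_neq0 _ nz] by blast
qed

lemma D_step:
  assumes sch: "isSch n v p" and v: "v \<in> Sn n" and a: "(i, Suc i) \<in> IP n v"
  shows "isSch n (sref i \<circ> v) (Dop i p)"
proof -
  let ?s = "sref i"
  have p: "p \<in> HGB n" using sch by (simp add: isSch_def)
  have lens: "len n (?s \<circ> v) + 1 = len n v" using len_s_down[OF i1 i2 v a] .
  have D: "Dop i p \<in> HGB n" using D_HGB[OF p] .
  have supp: "\<forall>u. \<not> bruhat_le n (?s \<circ> v) u \<longrightarrow> Dop i p u = 0"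
  proof (intro allI impI)
    fix u assume nle: "\<not> bruhat_le n (?s \<circ> v) u"
    show "Dop i p u = 0"
    proof (rule ccontr)
      assume nz: "Dop i p u \<noteq> 0"
      then have u: "u \<in> Sn n" using D HGB_zero_out by blast
      from D_support[OF nz] have "bruhat_le n v u \<or> bruhat_le n v (?s \<circ> u)"
        using sch by (auto simp: isSch_def)
      then show False
      proof
        assume "bruhat_le n v u"
        then show False using nle s_up_le[OF i1 i2 v a] bruhat_le_trans by blast
      next
        assume "bruhat_le n v (?s \<circ> u)"
        then show False using nle lift_A[OF i1 i2 a u] by blast
      qed
    qed
  qed
  have hom: "\<forall>u. Dop i p u \<noteq> 0 \<longrightarrow> homogeneous (len n (?s \<circ> v)) (Dop i p u)"
  proof (intro allI impI)
    fix u assume "Dop i p u \<noteq> 0"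
    then have "homogeneous (len n v - 1) (Dop i p u)"
      using D_homog[OF p _] sch by (auto simp: isSch_def)
    moreover have "len n v - 1 = len n (?s \<circ> v)" using lens by linarith
    ultimately show "homogeneous (len n (?s \<circ> v)) (Dop i p u)" by metis
  qed
  have val: "Dop i p (?s \<circ> v) = (\<Prod>\<beta>\<in>Inv n (?s \<circ> v). \<beta>)"
  proof -
    have "\<not> bruhat_le n v (?s \<circ> v)" using bruhat_le_len lens by fastforce
    then have z: "p (?s \<circ> v) = 0" using sch by (auto simp: isSch_def)
    have "act ?s p (?s \<circ> v) = perm_poly ?s (\<Prod>\<beta>\<in>Inv n v. \<beta>)"
      using sch by (simp add: act_s s_comp_ss[OF i1 i2] isSch_def)
    also have "\<dots> = - (var i - var (Suc i)) * (\<Prod>\<beta>\<in>Inv n (?s \<circ> v). \<beta>)"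
      by (rule prod_IP_s[OF i1 i2 v a])
    finally have "p (?s \<circ> v) - act ?s p (?s \<circ> v) = (var i - var (Suc i)) * (\<Prod>\<beta>\<in>Inv n (?s \<circ> v). \<beta>)"
      using z by (simp add: algebra_simps)
    then show ?thesis unfolding Dop_def by (intro divq_eq) simp
  qed
  show ?thesis using D supp hom val by (simp add: isSch_def)
qed

lemma D_zero:
  assumes sch: "isSch n v p" and v: "v \<in> Sn n" and a: "(i, Suc i) \<notin> IP n v"
  shows "Dop i p = (\<lambda>u. 0)"
proof
  fix u
  have p: "p \<in> HGB n" using sch by (simp add: isSch_def)
  show "Dop i p u = 0"
  proof (rule vanishing[OF D_HGB[OF p]])
    fix u assume nz: "Dop i p u \<noteq> 0"
    then have u: "u \<in> Sn n" using D_HGB[OF p] HGB_zero_out by blast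
    have h: "homogeneous (len n v - 1) (Dop i p u) \<and> 1 \<le> len n v"
      using D_homog[OF p _ nz] sch by (auto simp: isSch_def)
    from D_support[OF nz] have "bruhat_le n v u \<or> bruhat_le n v (sref i \<circ> u)"
      using sch by (auto simp: isSch_def)
    then have "bruhat_le n v u" using lift_B[OF i1 i2 a u] by blast
    then have "len n v \<le> len n u" by (rule bruhat_le_len)
    then show "\<exists>d. homogeneous d (Dop i p u) \<and> d < len n u" using h by (intro exI[of _ "len n v - 1"]) auto
  qed
qed

end



definition AP :: "nat \<Rightarrow> (nat \<times> nat) set" where
  "AP n = {(a, b). 1 \<le> a \<and> a < b \<and> b \<le> n}"

lemma AP_finite: "finite (AP n)"
  by (rule finite_subset[of _ "{1..n} \<times> {1..n}"]) (auto simp: AP_def)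

lemma IP_AP: "IP n v \<subseteq> AP n" by (auto simp: IP_def AP_def)

lemma len_le_AP: "len n v \<le> card (AP n)"
  by (simp add: len_IP card_mono[OF AP_finite IP_AP])

lemma all_desc:
  assumes h: "\<forall>i. 1 \<le> i \<and> Suc i \<le> n \<longrightarrow> (i, Suc i) \<in> IP n v"
  shows "IP n v = AP n"
proof
  show "IP n v \<subseteq> AP n" by (rule IP_AP)
  have key: "\<forall>a. 1 \<le> a \<and> a + d + 1 \<le> n \<longrightarrow> inv v (a + d + 1) < inv v a" for d
  proof (induction d)
    case 0 then show ?case using h by (auto simp: IP_def)
  next
    case (Suc d)
    show ?case
    proof (intro allI impI)
      fix a assume a: "1 \<le> a \<and> a + Suc d + 1 \<le> n"
      then have "inv v (a + d + 1) < inv v a" using Suc by simp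
      moreover have "(a + d + 1, Suc (a + d + 1)) \<in> IP n v" using h a by simp
      then have "inv v (a + Suc d + 1) < inv v (a + d + 1)" by (simp add: IP_def)
      ultimately show "inv v (a + Suc d + 1) < inv v a" by simp
    qed
  qed
  show "AP n \<subseteq> IP n v"
  proof
    fix p assume "p \<in> AP n"
    then obtain a b where ab: "p = (a, b)" "1 \<le> a" "a < b" "b \<le> n" by (auto simp: AP_def)
    have e: "a + (b - a - 1) + 1 = b" using ab by simp
    have "1 \<le> a \<and> a + (b - a - 1) + 1 \<le> n" using ab by simp
    then have "inv v (a + (b - a - 1) + 1) < inv v a" using key[of "b - a - 1"] by blast
    then have "inv v b < inv v a" unfolding e .
    then show "p \<in> IP n v" using ab by (simp add: IP_def)
  qed
qed

lemma prodInv_polys: "(\<Prod>\<beta>\<in>Inv n v. \<beta>) \<in> polys n"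
  unfolding prod_Inv by (intro polys_prod) (auto simp: IP_def intro!: polys_diff polys_var)

lemma homog_prodInv: "homogeneous (len n v) (\<Prod>\<beta>\<in>Inv n v. \<beta>)"
proof -
  have "homogeneous (\<Sum>p\<in>IP n v. 1) (\<Prod>(a, b)\<in>IP n v. var a - var b)"
    by (rule homog_prod) (auto simp: homog_varpair')
  then show ?thesis by (simp add: prod_Inv len_IP)
qed

lemma base_class:
  assumes v: "v \<in> Sn n" and all: "IP n v = AP n"
  shows "isSch n v (\<lambda>u. if u = v then (\<Prod>\<beta>\<in>Inv n v. \<beta>) else 0)"
proof -
  let ?p = "\<lambda>u. if u = v then (\<Prod>\<beta>\<in>Inv n v. \<beta>) else 0"
  have dvdv: "(var j - var k) dvd (\<Prod>\<beta>\<in>Inv n v. \<beta>)" if "1 \<le> j" "j < k" "k \<le> n" for j k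
  proof -
    have "(j, k) \<in> IP n v" using all that by (simp add: AP_def)
    then have "(case (j, k) of (a, b) \<Rightarrow> var a - var b) dvd (\<Prod>(a, b)\<in>IP n v. var a - var b)"
      by (intro dvd_prodI IP_finite)
    then show ?thesis by (simp add: prod_Inv)
  qed
  have "?p \<in> HGB n"
  proof (rule HGB_I)
    fix u assume "u \<notin> Sn n" then show "?p u = 0" using v by auto
  next
    fix u show "?p u \<in> polys n" by (simp add: prodInv_polys polys_zero)
  next
    fix u j k assume u: "u \<in> Sn n" and jk: "1 \<le> j" "j < k" "k \<le> n"
    have ne: "transpose j k \<circ> u \<noteq> u"
    proof
      assume "transpose j k \<circ> u = u"
      then have "(transpose j k \<circ> u) (inv u j) = u (inv u j)" by simp
      moreover have "u (inv u j) = j" using Sn_bij[OF u] by (simp add: bij_is_surj surj_f_inv_f)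
      ultimately show False using jk by simp
    qed
    show "(var j - var k) dvd (?p u - ?p (transpose j k \<circ> u))"
      using dvdv[OF jk] ne by auto
  qed
  moreover have "\<forall>u. \<not> bruhat_le n v u \<longrightarrow> ?p u = 0" using bruhat_le_refl[OF v] by auto
  moreover have "\<forall>u. ?p u \<noteq> 0 \<longrightarrow> homogeneous (len n v) (?p u)" using homog_prodInv by auto
  ultimately show ?thesis by (simp add: isSch_def)
qed

lemma schubert_exists: "v \<in> Sn n \<Longrightarrow> \<exists>p. isSch n v p"
proof (induction "card (AP n) - len n v" arbitrary: v rule: less_induct)
  case less
  note v = less.prems
  show ?case
  proof (cases "\<forall>i. 1 \<le> i \<and> Suc i \<le> n \<longrightarrow> (i, Suc i) \<in> IP n v")
    case True
    then show ?thesis using base_class[OF v all_desc] by blast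
  next
    case False
    then obtain i where i: "1 \<le> i" "Suc i \<le> n" "(i, Suc i) \<notin> IP n v" by blast
    let ?v' = "sref i \<circ> v"
    have v': "?v' \<in> Sn n" using s_Sn[OF i(1,2) v] .
    have l: "len n ?v' = len n v + 1" using len_s_up[OF i(1,2) v i(3)] .
    have "len n ?v' \<le> card (AP n)" by (rule len_le_AP)
    then have "card (AP n) - len n ?v' < card (AP n) - len n v" using l by linarith
    then obtain p' where p': "isSch n ?v' p'" using less.hyps v' by blast
    have a': "(i, Suc i) \<in> IP n ?v'" using alpha_IP_s[OF i(1,2) v] i(3) by simp
    have "isSch n (sref i \<circ> ?v') (Dop i p')" by (rule D_step[OF i(1,2) p' v' a'])
    moreover have "sref i \<circ> ?v' = v" by (rule s_comp_ss[OF i(1,2)])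
    ultimately show ?thesis by metis
  qed
qed

lemma schubert_isSch: "v \<in> Sn n \<Longrightarrow> isSch n v (schubert n v)"
  using schubert_exists isSch_schubert by metis



lemma Dop_schubert:
  assumes i1: "1 \<le> i" and i2: "Suc i \<le> n" and v: "v \<in> Sn n"
  shows "Dop i (schubert n v) u = (if (i, Suc i) \<in> IP n v then schubert n (sref i \<circ> v) u else 0)"
proof (cases "(i, Suc i) \<in> IP n v")
  case True
  have "isSch n (sref i \<circ> v) (Dop i (schubert n v))"
    by (rule D_step[OF i1 i2 schubert_isSch[OF v] v True])
  then have "schubert n (sref i \<circ> v) = Dop i (schubert n v)" by (rule isSch_schubert)
  then show ?thesis using True by simp
next
  case False
  have "Dop i (schubert n v) = (\<lambda>u. 0)" by (rule D_zero[OF i1 i2 schubert_isSch[OF v] v False])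
  then show ?thesis using False by simp
qed

lemma finite_bruhat: "finite {v. bruhat_le n v w}"
proof (rule finite_subset)
  show "{v. bruhat_le n v w} \<subseteq> {u. u permutes {1..n}}" by (auto simp: bruhat_le_def Sn_def)
  show "finite {u. u permutes {1..n}}" by (rule finite_permutations) simp
qed

theorem mainTheorem11:
  fixes n i :: nat and w :: "nat \<Rightarrow> nat"
    and p c :: "(nat \<Rightarrow> nat) \<Rightarrow> cpoly"
  assumes "w \<in> Sn n" and "1 \<le> i" and "i \<le> n - 1"
    and "p \<in> HX n w"
    and "\<forall>v. bruhat_le n v w \<longrightarrow> c v \<in> polys n"
    and "p = (\<lambda>u. \<Sum>v\<in>{v. bruhat_le n v w}. c v * schubertX n w v u)"
  shows "let P = (\<lambda>u. \<Sum>v\<in>{v. bruhat_le n v w}. c v * schubert n v u) in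
           (\<forall>u. bruhat_le n u w \<longrightarrow>
              (var i - var (Suc i)) * Dop i P u = P u - act (sref i) P u) \<and>
           iota n w (Dop i P) =
             (\<lambda>u. (\<Sum>v\<in>{v. bruhat_le n v w}. dd i (c v) * schubertX n w v u) +
                  (\<Sum>v\<in>{v. bruhat_le n v w \<and> bruhat_lt n (sref i \<circ> v) v}.
                     perm_poly (sref i) (c v) * schubertX n w (sref i \<circ> v) u)) \<and>
           iota n w (Dop i P) \<in> HX n w"
proof -
  have i1: "1 \<le> i" using assms(2) .
  have i2: "Suc i \<le> n" using assms(2,3) by linarith
  define B where "B = {v. bruhat_le n v w}"
  define P where "P = (\<lambda>u. \<Sum>v\<in>B. c v * schubert n v u)"
  let ?a = "var i - var (Suc i)"
  let ?s = "sref i"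
  have finB: "finite B" unfolding B_def by (rule finite_bruhat)
  have BS: "v \<in> Sn n" if "v \<in> B" for v using that by (auto simp: B_def bruhat_le_def)
  have cB: "c v \<in> polys n" if "v \<in> B" for v using that assms(5) by (auto simp: B_def)
  have schS: "isSch n v (schubert n v)" if "v \<in> B" for v using schubert_isSch[OF BS[OF that]] .
  have PH: "P \<in> HGB n"
    unfolding P_def by (rule HGB_sum, rule HGB_smult) (use schS cB in \<open>auto simp: isSch_def\<close>)
  have Pi: "ishom (perm_poly ?s)" by (rule Pi_s)
  have C1: "\<forall>u. bruhat_le n u w \<longrightarrow> ?a * Dop i P u = P u - act ?s P u"
    using D_eq[OF i1 i2 PH] by blast
  have main: "Dop i P u = (\<Sum>v\<in>B. dd i (c v) * schubert n v u) +
      (\<Sum>v\<in>{v \<in> B. (i, Suc i) \<in> IP n v}. perm_poly ?s (c v) * schubert n (?s \<circ> v) u)" for u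
  proof -
    have per_v: "c v * schubert n v u - perm_poly ?s (c v * schubert n v (?s \<circ> u)) =
        ?a * (dd i (c v) * schubert n v u +
              perm_poly ?s (c v) * (if (i, Suc i) \<in> IP n v then schubert n (?s \<circ> v) u else 0))"
      if v: "v \<in> B" for v
    proof -
      have d1: "?a * dd i (c v) = c v - perm_poly ?s (c v)" by (rule dd_eq)
      have d2: "?a * Dop i (schubert n v) u = schubert n v u - perm_poly ?s (schubert n v (?s \<circ> u))"
        using D_eq[OF i1 i2, of "schubert n v" u] schS[OF v] by (simp add: isSch_def act_s)
      have d3: "Dop i (schubert n v) u = (if (i, Suc i) \<in> IP n v then schubert n (?s \<circ> v) u else 0)"
        by (rule Dop_schubert[OF i1 i2 BS[OF v]])
      have "c v * schubert n v u - perm_poly ?s (c v * schubert n v (?s \<circ> u)) =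
          (c v - perm_poly ?s (c v)) * schubert n v u +
          perm_poly ?s (c v) * (schubert n v u - perm_poly ?s (schubert n v (?s \<circ> u)))"
        by (simp add: hom_mult[OF Pi] algebra_simps)
      also have "\<dots> = ?a * dd i (c v) * schubert n v u + perm_poly ?s (c v) * (?a * Dop i (schubert n v) u)"
        by (simp only: d1 d2)
      finally show ?thesis unfolding d3 by (simp add: algebra_simps)
    qed
    have "?a * Dop i P u = P u - perm_poly ?s (P (?s \<circ> u))"
      using D_eq[OF i1 i2 PH] by (simp add: act_s)
    also have "\<dots> = (\<Sum>v\<in>B. c v * schubert n v u - perm_poly ?s (c v * schubert n v (?s \<circ> u)))"
      unfolding P_def by (simp add: hom_sum[OF Pi] sum_subtractf)
    also have "\<dots> = (\<Sum>v\<in>B. ?a * (dd i (c v) * schubert n v u +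
              perm_poly ?s (c v) * (if (i, Suc i) \<in> IP n v then schubert n (?s \<circ> v) u else 0)))"
      by (rule sum.cong[OF refl]) (rule per_v)
    also have "\<dots> = (\<Sum>v\<in>B. ?a * (dd i (c v) * schubert n v u) +
       ?a * (if (i, Suc i) \<in> IP n v then perm_poly ?s (c v) * schubert n (?s \<circ> v) u else 0))"
      by (rule sum.cong[OF refl]) (simp add: distrib_left)
    also have "\<dots> = ?a * ((\<Sum>v\<in>B. dd i (c v) * schubert n v u) +
      (\<Sum>v\<in>B. (if (i, Suc i) \<in> IP n v then perm_poly ?s (c v) * schubert n (?s \<circ> v) u else 0)))"
      by (simp only: sum.distrib sum_distrib_left distrib_left)
    also have "(\<Sum>v\<in>B. (if (i, Suc i) \<in> IP n v then perm_poly ?s (c v) * schubert n (?s \<circ> v) u else 0))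
        = (\<Sum>v\<in>{v \<in> B. (i, Suc i) \<in> IP n v}. perm_poly ?s (c v) * schubert n (?s \<circ> v) u)"
      using finB by (simp add: sum.inter_filter)
    finally have E: "?a * Dop i P u = ?a * ((\<Sum>v\<in>B. dd i (c v) * schubert n v u) +
      (\<Sum>v\<in>{v \<in> B. (i, Suc i) \<in> IP n v}. perm_poly ?s (c v) * schubert n (?s \<circ> v) u))" .
    show ?thesis using E unfolding mult_left_cancel[OF alpha_neq0] .
  qed
  have Bset: "{v. bruhat_le n v w \<and> bruhat_lt n (?s \<circ> v) v} = {v \<in> B. (i, Suc i) \<in> IP n v}"
    using bruhat_lt_s[OF i1 i2] BS by (auto simp: B_def)
  have C2: "iota n w (Dop i P) =
             (\<lambda>u. (\<Sum>v\<in>{v. bruhat_le n v w}. dd i (c v) * schubertX n w v u) +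
                  (\<Sum>v\<in>{v. bruhat_le n v w \<and> bruhat_lt n (?s \<circ> v) v}.
                     perm_poly ?s (c v) * schubertX n w (?s \<circ> v) u))"
  proof
    fix u
    show "iota n w (Dop i P) u = (\<Sum>v\<in>{v. bruhat_le n v w}. dd i (c v) * schubertX n w v u) +
                  (\<Sum>v\<in>{v. bruhat_le n v w \<and> bruhat_lt n (?s \<circ> v) v}.
                     perm_poly ?s (c v) * schubertX n w (?s \<circ> v) u)"
    proof (cases "bruhat_le n u w")
      case True
      then show ?thesis unfolding Bset using main[of u] by (simp add: iota_def schubertX_def B_def)
    next
      case False
      then show ?thesis by (simp add: iota_def schubertX_def)
    qed
  qed
  have DH: "Dop i P \<in> HGB n" by (rule D_HGB[OF i1 i2 PH])
  have C3: "iota n w (Dop i P) \<in> HX n w"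
    unfolding HX_def gkm_on_def
  proof (intro CollectI conjI allI impI ballI)
    fix u assume "u \<notin> {u. bruhat_le n u w}" then show "iota n w (Dop i P) u = 0" by (simp add: iota_def)
  next
    fix u show "iota n w (Dop i P) u \<in> polys n" by (simp add: iota_def HGB_polys[OF DH] polys_zero)
  next
    fix u j k
    assume h: "u \<in> {u. bruhat_le n u w} \<and> 1 \<le> j \<and> j < k \<and> k \<le> n \<and> transpose j k \<circ> u \<in> {u. bruhat_le n u w}"
    then have u: "u \<in> Sn n" by (simp add: bruhat_le_def)
    have "(var j - var k) dvd (Dop i P u - Dop i P (transpose j k \<circ> u))"
      using HGB_edge[OF DH u] h by blast
    then show "(var j - var k) dvd (iota n w (Dop i P) u - iota n w (Dop i P) (transpose j k \<circ> u))"
      using h by (simp add: iota_def)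
  qed
  show ?thesis unfolding Let_def P_def[symmetric] B_def[symmetric]
    using C1 C2 C3 by (simp add: B_def)
qed


end
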